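(* Let $k\ge2$, let $G$ be a $k$-player game and $M$ a $k$-partite Bell functional. Then for every $d\ge1$, $\omega^*_d(G)\le d^{k-1}\omega(G)$ and $\omega^*_d(M)\le(2d)^{k-1}\omega(M)$.
   Context: A $k$-partite Bell functional is a real array $M=(M_{x_1,\dots,x_k}^{a_1,\dots,a_k})$ indexed by finite question and answer sets for each party; a $k$-player game is one with nonnegative coefficients. $\omega(M)=\sup|\sum M_{x_1..x_k}^{a_1..a_k}P(a_1,\dots,a_k|x_1,\dots,x_k)|$ over the convex hull of products $P_1(a_1|x_1)\cdots P_k(a_k|x_k)$ of conditional probability distributions. $\omega^*_d(M)=\sup|\sum M_{x_1..x_k}^{a_1..a_k}\langle\psi|E_{x_1}^{a_1}\otimes\cdots\otimes E_{x_k}^{a_k}|\psi\rangle|$ over all $m\le d$, unit $|\psi\rangle\in(\mathbb C^m)^{\otimes k}$ and POVMs $\{E_{x_i}^{a_i}\}_{a_i}$ in $M_m$ for each party $i$. *)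

theory Defs
  imports Complex_Main "HOL-Library.FuncSet"
begin

text \<open>Party p has a finite question set Q p and a
finite answer set A p. A question tuple is x \<in> PiE {..<k} Q, an answer tuple
a \<in> PiE {..<k} A.\<close>

definition bell_sum ::
  "nat \<Rightarrow> (nat \<Rightarrow> 'q set) \<Rightarrow> (nat \<Rightarrow> 'a set) \<Rightarrow> ((nat \<Rightarrow> 'q) \<Rightarrow> (nat \<Rightarrow> 'a) \<Rightarrow> real)
     \<Rightarrow> ((nat \<Rightarrow> 'q) \<Rightarrow> (nat \<Rightarrow> 'a) \<Rightarrow> real) \<Rightarrow> real" where
  "bell_sum k Q A M P = (\<Sum>x\<in>PiE {..<k} Q. \<Sum>a\<in>PiE {..<k} A. M x a * P x a)"

definition cond_prob :: "'q set \<Rightarrow> 'a set \<Rightarrow> ('q \<Rightarrow> 'a \<Rightarrow> real) \<Rightarrow> bool" where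
  "cond_prob X B P \<longleftrightarrow> (\<forall>x\<in>X. (\<forall>a\<in>B. 0 \<le> P x a) \<and> (\<Sum>a\<in>B. P x a) = 1)"

definition product_behaviours ::
  "nat \<Rightarrow> (nat \<Rightarrow> 'q set) \<Rightarrow> (nat \<Rightarrow> 'a set) \<Rightarrow> ((nat \<Rightarrow> 'q) \<Rightarrow> (nat \<Rightarrow> 'a) \<Rightarrow> real) set" where
  "product_behaviours k Q A =
     {(\<lambda>x a. \<Prod>p<k. Ps p (x p) (a p)) | Ps. \<forall>p<k. cond_prob (Q p) (A p) (Ps p)}"

definition local_behaviours ::
  "nat \<Rightarrow> (nat \<Rightarrow> 'q set) \<Rightarrow> (nat \<Rightarrow> 'a set) \<Rightarrow> ((nat \<Rightarrow> 'q) \<Rightarrow> (nat \<Rightarrow> 'a) \<Rightarrow> real) set" where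
  "local_behaviours k Q A =
     {(\<lambda>x a. \<Sum>j<n. c j * R j x a) | (n::nat) c R.
        (\<forall>j<n. 0 \<le> c j \<and> R j \<in> product_behaviours k Q A) \<and> (\<Sum>j<n. c j) = 1}"

definition classical_value ::
  "nat \<Rightarrow> (nat \<Rightarrow> 'q set) \<Rightarrow> (nat \<Rightarrow> 'a set) \<Rightarrow> ((nat \<Rightarrow> 'q) \<Rightarrow> (nat \<Rightarrow> 'a) \<Rightarrow> real) \<Rightarrow> real" where
  "classical_value k Q A M = Sup ((\<lambda>P. \<bar>bell_sum k Q A M P\<bar>) ` local_behaviours k Q A)"

text \<open>m \<times> m complex matrices are represented as functions nat \<Rightarrow> nat \<Rightarrow> complex, of which
only the entries with indices < m matter.\<close>
definition psd :: "nat \<Rightarrow> (nat \<Rightarrow> nat \<Rightarrow> complex) \<Rightarrow> bool" where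
  "psd m E \<longleftrightarrow> (\<forall>v :: nat \<Rightarrow> complex.
     let z = (\<Sum>i<m. \<Sum>j<m. cnj (v i) * E i j * v j) in Im z = 0 \<and> 0 \<le> Re z)"

definition povm :: "nat \<Rightarrow> 'a set \<Rightarrow> ('a \<Rightarrow> nat \<Rightarrow> nat \<Rightarrow> complex) \<Rightarrow> bool" where
  "povm m B E \<longleftrightarrow> (\<forall>a\<in>B. psd m (E a)) \<and>
     (\<forall>i<m. \<forall>j<m. (\<Sum>a\<in>B. E a i j) = (if i = j then 1 else 0))"

text \<open>Vectors in (C^m)^{\<otimes>k} are functions on multi-indices PiE {..<k} (\<lambda>_. {..<m}).\<close>
abbreviation multi_idx :: "nat \<Rightarrow> nat \<Rightarrow> (nat \<Rightarrow> nat) set" where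
  "multi_idx k m \<equiv> PiE {..<k} (\<lambda>_. {..<m})"

definition unit_state :: "nat \<Rightarrow> nat \<Rightarrow> ((nat \<Rightarrow> nat) \<Rightarrow> complex) \<Rightarrow> bool" where
  "unit_state k m \<psi> \<longleftrightarrow> (\<Sum>i\<in>multi_idx k m. (cmod (\<psi> i))\<^sup>2) = 1"

text \<open>\<langle>\<psi>| F_0 \<otimes> ... \<otimes> F_(k-1) |\<psi>\<rangle>, tensor product written out entrywise.\<close>
definition tensor_expect ::
  "nat \<Rightarrow> nat \<Rightarrow> ((nat \<Rightarrow> nat) \<Rightarrow> complex) \<Rightarrow> (nat \<Rightarrow> nat \<Rightarrow> nat \<Rightarrow> complex) \<Rightarrow> complex" where
  "tensor_expect k m \<psi> F = (\<Sum>i\<in>multi_idx k m. \<Sum>j\<in>multi_idx k m.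
      cnj (\<psi> i) * (\<Prod>p<k. F p (i p) (j p)) * \<psi> j)"

text \<open>E p x a : POVM element of party p for question x and answer a.\<close>
definition quantum_bias ::
  "nat \<Rightarrow> (nat \<Rightarrow> 'q set) \<Rightarrow> (nat \<Rightarrow> 'a set) \<Rightarrow> ((nat \<Rightarrow> 'q) \<Rightarrow> (nat \<Rightarrow> 'a) \<Rightarrow> real)
     \<Rightarrow> nat \<Rightarrow> ((nat \<Rightarrow> nat) \<Rightarrow> complex) \<Rightarrow> (nat \<Rightarrow> 'q \<Rightarrow> 'a \<Rightarrow> nat \<Rightarrow> nat \<Rightarrow> complex) \<Rightarrow> real" where
  "quantum_bias k Q A M m \<psi> E =
     cmod (\<Sum>x\<in>PiE {..<k} Q. \<Sum>a\<in>PiE {..<k} A.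
             complex_of_real (M x a) * tensor_expect k m \<psi> (\<lambda>p. E p (x p) (a p)))"

definition quantum_value ::
  "nat \<Rightarrow> (nat \<Rightarrow> 'q set) \<Rightarrow> (nat \<Rightarrow> 'a set) \<Rightarrow> ((nat \<Rightarrow> 'q) \<Rightarrow> (nat \<Rightarrow> 'a) \<Rightarrow> real) \<Rightarrow> nat \<Rightarrow> real" where
  "quantum_value k Q A M d = Sup {quantum_bias k Q A M m \<psi> E | m \<psi> E.
      1 \<le> m \<and> m \<le> d \<and> unit_state k m \<psi> \<and>
      (\<forall>p<k. \<forall>x\<in>Q p. povm m (A p) (E p x))}"

end

theory Submission
  imports Defs
begin

definition Ix :: "nat \<Rightarrow> (nat \<Rightarrow> nat) \<Rightarrow> (nat \<Rightarrow> nat) set" where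
  "Ix k n = PiE {..<k} (\<lambda>p. {..<n p})"

lemma finite_Ix[simp]: "finite (Ix k n)"
  unfolding Ix_def by (intro finite_PiE) auto

lemma Ix_upd: assumes "p < k" "i \<in> Ix k (n(p:=1))" "s < n p"
  shows "i(p:=s) \<in> Ix k n"
  using assms unfolding Ix_def PiE_def Pi_def extensional_def by auto

lemma Ix_upd0: assumes "p < k" "i \<in> Ix k n"
  shows "i(p:=0) \<in> Ix k (n(p:=1))"
  using assms unfolding Ix_def PiE_def Pi_def extensional_def by auto

lemma Ix_1_p: assumes "i \<in> Ix k (n(p:=1))" "p < k" shows "i p = 0"
  using assms unfolding Ix_def PiE_def Pi_def by auto

lemma sum_split:
  assumes "p < k"
  shows "(\<Sum>i\<in>Ix k n. f i) = (\<Sum>s<n p. \<Sum>i\<in>Ix k (n(p:=1)). f (i(p:=s)))"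
proof -
  have bij: "bij_betw (\<lambda>(s,i). i(p:=s)) ({..<n p} \<times> Ix k (n(p:=1))) (Ix k n)"
  proof (rule bij_betwI')
    fix x y assume "x \<in> {..<n p} \<times> Ix k (n(p:=1))" "y \<in> {..<n p} \<times> Ix k (n(p:=1))"
    then obtain s i s' i' where xy: "x = (s,i)" "y = (s',i')" "i \<in> Ix k (n(p:=1))" "i' \<in> Ix k (n(p:=1))"
      by auto
    have "i p = 0" "i' p = 0" using xy Ix_1_p assms by auto
    moreover have "i(p:=s) = i'(p:=s') \<Longrightarrow> s = s' \<and> i = i'"
    proof -
      assume e: "i(p:=s) = i'(p:=s')"
      have "s = s'" using fun_cong[OF e, of p] by simp
      moreover have "i q = i' q" for q using fun_cong[OF e, of q] \<open>i p = 0\<close> \<open>i' p = 0\<close>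
        by (cases "q = p") auto
      ultimately show ?thesis by auto
    qed
    ultimately show "((case x of (s, i) \<Rightarrow> i(p := s)) = (case y of (s, i) \<Rightarrow> i(p := s))) = (x = y)"
      using xy by auto
  next
    fix x assume "x \<in> {..<n p} \<times> Ix k (n(p:=1))"
    then show "(case x of (s, i) \<Rightarrow> i(p := s)) \<in> Ix k n" using Ix_upd assms by auto
  next
    fix j assume j: "j \<in> Ix k n"
    have "j p < n p" using j assms unfolding Ix_def by auto
    then show "\<exists>x\<in>{..<n p} \<times> Ix k (n(p:=1)). j = (case x of (s, i) \<Rightarrow> i(p := s))"
      using Ix_upd0[OF assms j] by (intro bexI[of _ "(j p, j(p:=0))"]) auto
  qed
  have "(\<Sum>s<n p. \<Sum>i\<in>Ix k (n(p:=1)). f (i(p:=s))) = (\<Sum>x\<in>{..<n p} \<times> Ix k (n(p:=1)). f ((\<lambda>(s,i). i(p:=s)) x))"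
    by (simp add: sum.cartesian_product split_def)
  also have "\<dots> = (\<Sum>i\<in>Ix k n. f i)"
    by (rule sum.reindex_bij_betw[OF bij])
  finally show ?thesis by simp
qed

definition texp2 :: "nat \<Rightarrow> (nat \<Rightarrow> nat) \<Rightarrow> ((nat \<Rightarrow> nat) \<Rightarrow> complex) \<Rightarrow> ((nat \<Rightarrow> nat) \<Rightarrow> complex)
   \<Rightarrow> (nat \<Rightarrow> nat \<Rightarrow> nat \<Rightarrow> complex) \<Rightarrow> complex" where
  "texp2 k n \<phi> \<chi> F = (\<Sum>i\<in>Ix k n. \<Sum>j\<in>Ix k n. cnj (\<phi> i) * (\<Prod>q<k. F q (i q) (j q)) * \<chi> j)"

definition sl :: "nat \<Rightarrow> nat \<Rightarrow> ((nat \<Rightarrow> nat) \<Rightarrow> complex) \<Rightarrow> ((nat \<Rightarrow> nat) \<Rightarrow> complex)" where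
  "sl p s \<phi> = (\<lambda>i. \<phi> (i(p:=s)))"

lemma prod_upd_split:
  fixes F :: "nat \<Rightarrow> nat \<Rightarrow> nat \<Rightarrow> complex"
  assumes "p < k"
  shows "(\<Prod>q<k. F q ((i(p:=s)) q) ((j(p:=t)) q)) = F p s t * (\<Prod>q<k. (F(p:=\<lambda>_ _. 1)) q (i q) (j q))"
proof -
  have "(\<Prod>q<k. F q ((i(p:=s)) q) ((j(p:=t)) q)) = F p s t * (\<Prod>q\<in>{..<k}-{p}. F q ((i(p:=s)) q) ((j(p:=t)) q))"
    using assms by (subst prod.remove[of "{..<k}" p]) auto
  also have "(\<Prod>q\<in>{..<k}-{p}. F q ((i(p:=s)) q) ((j(p:=t)) q)) = (\<Prod>q\<in>{..<k}-{p}. (F(p:=\<lambda>_ _. 1)) q (i q) (j q))"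
    by (rule prod.cong) auto
  also have "\<dots> = (\<Prod>q<k. (F(p:=\<lambda>_ _. 1)) q (i q) (j q))"
    using assms prod.remove[of "{..<k}" p "\<lambda>q. (F(p:=\<lambda>_ _. 1)) q (i q) (j q)"] by simp
  finally show ?thesis .
qed

lemma texp2_split:
  assumes "p < k"
  shows "texp2 k n \<phi> \<chi> F = (\<Sum>s<n p. \<Sum>t<n p. F p s t * texp2 k (n(p:=1)) (sl p s \<phi>) (sl p t \<chi>) (F(p:=\<lambda>_ _. 1)))"
proof -
  let ?G = "F(p:=\<lambda>_ _. 1)" and ?n = "n(p:=1)"
  have "texp2 k n \<phi> \<chi> F = (\<Sum>s<n p. \<Sum>i\<in>Ix k ?n. \<Sum>t<n p. \<Sum>j\<in>Ix k ?n.
        cnj (\<phi> (i(p:=s))) * (\<Prod>q<k. F q ((i(p:=s)) q) ((j(p:=t)) q)) * \<chi> (j(p:=t)))"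
    unfolding texp2_def by (subst sum_split[OF assms], subst sum_split[OF assms]) simp
  also have "\<dots> = (\<Sum>s<n p. \<Sum>t<n p. \<Sum>i\<in>Ix k ?n. \<Sum>j\<in>Ix k ?n.
        F p s t * (cnj (sl p s \<phi> i) * (\<Prod>q<k. ?G q (i q) (j q)) * sl p t \<chi> j))"
    unfolding prod_upd_split[OF assms] sl_def
    by (rule sum.cong[OF refl], subst sum.swap) (simp add: ac_simps)
  also have "\<dots> = (\<Sum>s<n p. \<Sum>t<n p. F p s t * texp2 k ?n (sl p s \<phi>) (sl p t \<chi>) ?G)"
    unfolding texp2_def by (simp add: sum_distrib_left)
  finally show ?thesis .
qed

lemma texp2_scalar:
  fixes F :: "nat \<Rightarrow> nat \<Rightarrow> nat \<Rightarrow> complex"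
  assumes "p < k"
  shows "texp2 k n \<phi> \<chi> (F(p:=\<lambda>_ _. c)) = c * texp2 k n \<phi> \<chi> (F(p:=\<lambda>_ _. 1))"
proof -
  have "(\<Prod>q<k. (F(p:=\<lambda>_ _. c)) q (i q) (j q)) = c * (\<Prod>q<k. (F(p:=\<lambda>_ _. 1)) q (i q) (j q))" for i j
  proof -
    have "(\<Prod>q<k. (F(p:=\<lambda>_ _. c)) q (i q) (j q)) = c * (\<Prod>q\<in>{..<k}-{p}. F q (i q) (j q))"
      using assms by (subst prod.remove[of _ p]) (auto intro!: prod.cong)
    moreover have "(\<Prod>q<k. (F(p:=\<lambda>_ _. 1)) q (i q) (j q)) = (\<Prod>q\<in>{..<k}-{p}. F q (i q) (j q))"
      using assms by (subst prod.remove[of _ p]) (auto intro!: prod.cong)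
    ultimately show ?thesis by simp
  qed
  then show ?thesis unfolding texp2_def by (simp add: sum_distrib_left ac_simps)
qed

lemma texp2_sesq:
  assumes "finite S" "finite T"
  shows "texp2 k n (\<lambda>i. \<Sum>s\<in>S. c s * \<phi> s i) (\<lambda>i. \<Sum>t\<in>T. d t * \<chi> t i) F
       = (\<Sum>s\<in>S. \<Sum>t\<in>T. cnj (c s) * d t * texp2 k n (\<phi> s) (\<chi> t) F)"
proof -
  have "texp2 k n (\<lambda>i. \<Sum>s\<in>S. c s * \<phi> s i) (\<lambda>i. \<Sum>t\<in>T. d t * \<chi> t i) F
     = (\<Sum>i\<in>Ix k n. \<Sum>j\<in>Ix k n. \<Sum>s\<in>S. \<Sum>t\<in>T. cnj (c s) * d t * (cnj (\<phi> s i) * (\<Prod>q<k. F q (i q) (j q)) * \<chi> t j))"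
     (is "_ = (\<Sum>i\<in>_. \<Sum>j\<in>_. \<Sum>s\<in>_. \<Sum>t\<in>_. ?g s t i j)")
    unfolding texp2_def cnj_sum by (simp add: sum_distrib_left sum_distrib_right ac_simps)
  also have "\<dots> = (\<Sum>s\<in>S. \<Sum>t\<in>T. \<Sum>i\<in>Ix k n. \<Sum>j\<in>Ix k n. cnj (c s) * d t * (cnj (\<phi> s i) * (\<Prod>q<k. F q (i q) (j q)) * \<chi> t j))"
  proof -
    have "\<And>i. (\<Sum>j\<in>Ix k n. \<Sum>s\<in>S. \<Sum>t\<in>T. ?g s t i j) = (\<Sum>s\<in>S. \<Sum>j\<in>Ix k n. \<Sum>t\<in>T. ?g s t i j)"
      by (rule sum.swap)
    moreover have "\<And>i s. (\<Sum>j\<in>Ix k n. \<Sum>t\<in>T. ?g s t i j) = (\<Sum>t\<in>T. \<Sum>j\<in>Ix k n. ?g s t i j)"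
      by (rule sum.swap)
    ultimately have "(\<Sum>i\<in>Ix k n. \<Sum>j\<in>Ix k n. \<Sum>s\<in>S. \<Sum>t\<in>T. ?g s t i j) = (\<Sum>i\<in>Ix k n. \<Sum>s\<in>S. \<Sum>t\<in>T. \<Sum>j\<in>Ix k n. ?g s t i j)"
      by simp
    also have "\<dots> = (\<Sum>s\<in>S. \<Sum>i\<in>Ix k n. \<Sum>t\<in>T. \<Sum>j\<in>Ix k n. ?g s t i j)"
      by (rule sum.swap)
    also have "\<dots> = (\<Sum>s\<in>S. \<Sum>t\<in>T. \<Sum>i\<in>Ix k n. \<Sum>j\<in>Ix k n. ?g s t i j)"
      by (rule sum.cong[OF refl], rule sum.swap)
    finally show ?thesis .
  qed
  also have "\<dots> = (\<Sum>s\<in>S. \<Sum>t\<in>T. cnj (c s) * d t * texp2 k n (\<phi> s) (\<chi> t) F)"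
    unfolding texp2_def by (simp add: sum_distrib_left)
  finally show ?thesis .
qed

definition Rph :: "complex set" where "Rph = {1, \<i>, -1, -\<i>}"
definition Th :: "nat \<Rightarrow> (nat \<Rightarrow> complex) set" where "Th m = PiE {..<m} (\<lambda>_. Rph)"

lemma finite_Th[simp]: "finite (Th m)"
  unfolding Th_def Rph_def by (intro finite_PiE) auto

lemma card_Th: "card (Th m) = 4 ^ m"
proof -
  have "card Rph = 4" unfolding Rph_def by (simp add: complex_eq_iff)
  then show ?thesis unfolding Th_def by (simp add: card_PiE)
qed

lemma ipow_mod: "(\<i>::complex) ^ e = \<i> ^ (e mod 4)"
proof -
  have "(\<i>::complex) ^ e = \<i> ^ (4 * (e div 4) + e mod 4)" by simp
  also have "\<dots> = \<i> ^ (e mod 4)" by (simp only: power_add power_mult) simp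
  finally show ?thesis .
qed

lemma sumR: "(\<Sum>c\<in>Rph. c ^ e) = (if 4 dvd e then 4 else 0)"
proof -
  have d: "(1::complex) \<noteq> \<i>" "(1::complex) \<noteq> -1" "(1::complex) \<noteq> -\<i>" "\<i> \<noteq> (-1::complex)"
    "\<i> \<noteq> -\<i>" "(-1::complex) \<noteq> -\<i>" by (simp_all add: complex_eq_iff)
  have "(\<Sum>c\<in>Rph. c ^ e) = 1 + \<i> ^ e + (-1) ^ e + (-\<i>) ^ e"
    unfolding Rph_def using d by (simp add: add.assoc)
  also have "\<dots> = (1 + (-1) ^ e) * (1 + \<i> ^ e)"
    by (subst power_minus[of \<i>]) (simp add: distrib_left distrib_right)
  also have "\<dots> = (if 4 dvd e then 4 else 0)"
  proof -
    have "e mod 4 < 4" by simp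
    then have "e mod 4 = 0 \<or> e mod 4 = 1 \<or> e mod 4 = 2 \<or> e mod 4 = 3" by linarith
    moreover have "(-1::complex) ^ e = (-1) ^ (e mod 4)"
    proof -
      have "(-1::complex) ^ e = (-1) ^ (4 * (e div 4) + e mod 4)" by simp
      also have "\<dots> = (-1) ^ (e mod 4)" by (simp only: power_add power_mult) simp
      finally show ?thesis .
    qed
    ultimately show ?thesis
    proof (elim disjE)
      assume h: "e mod 4 = 0" then show ?thesis using \<open>(-1::complex) ^ e = _\<close>
        by (subst ipow_mod) (simp add: dvd_eq_mod_eq_0)
    next
      assume h: "e mod 4 = 1" then show ?thesis using \<open>(-1::complex) ^ e = _\<close>
        by (subst ipow_mod) (simp add: dvd_eq_mod_eq_0)
    next
      assume h: "e mod 4 = 2" then show ?thesis using \<open>(-1::complex) ^ e = _\<close>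
        by (subst ipow_mod) (simp add: dvd_eq_mod_eq_0)
    next
      assume h: "e mod 4 = 3" then show ?thesis using \<open>(-1::complex) ^ e = _\<close>
        by (subst ipow_mod) (simp add: dvd_eq_mod_eq_0)
    qed
  qed
  finally show ?thesis .
qed

lemma phase_sum:
  "(\<Sum>\<theta>\<in>Th m. \<Prod>l<m. \<theta> l ^ e l) = (if \<forall>l<m. 4 dvd e l then 4 ^ m else 0)"
proof -
  have "(\<Sum>\<theta>\<in>Th m. \<Prod>l<m. \<theta> l ^ e l) = (\<Prod>l<m. \<Sum>c\<in>Rph. c ^ e l)"
    unfolding Th_def by (subst prod_sum_PiE) (auto simp: Rph_def)
  also have "\<dots> = (\<Prod>l<m. (if 4 dvd e l then 4 else 0))"
    by (simp add: sumR)
  also have "\<dots> = (if \<forall>l<m. 4 dvd e l then 4 ^ m else 0)"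
    by auto
  finally show ?thesis .
qed

lemma cnj_Rph: "c \<in> Rph \<Longrightarrow> cnj c = c ^ 3"
  unfolding Rph_def by (auto simp: complex_eq_iff power3_eq_cube)

lemma Th_mem: "\<theta> \<in> Th m \<Longrightarrow> l < m \<Longrightarrow> \<theta> l \<in> Rph"
  unfolding Th_def by auto

lemma pw_delta: fixes \<theta> :: "nat \<Rightarrow> complex" assumes "s < m"
  shows "(\<Prod>l<m. (\<theta> l :: complex) ^ (c * of_bool (l = s))) = \<theta> s ^ c"
proof -
  have "(\<Prod>l<m. \<theta> l ^ (c * of_bool (l = s))) = (\<Prod>l<m. if l = s then \<theta> l ^ c else 1)"
    by (rule prod.cong) auto
  also have "\<dots> = \<theta> s ^ c" using assms by (subst prod.delta) auto
  finally show ?thesis .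
qed

lemma four_exp:
  assumes "\<theta> \<in> Th m" "s < m" "t < m" "s' < m" "t' < m"
  shows "cnj (\<theta> s) * \<theta> t * \<theta> s' * cnj (\<theta> t') =
    (\<Prod>l<m. \<theta> l ^ (3 * of_bool (l = s) + 1 * of_bool (l = t) + 1 * of_bool (l = s') + 3 * of_bool (l = t')))"
  using assms
  by (simp only: power_add prod.distrib pw_delta cnj_Rph Th_mem) simp

lemma two_exp:
  assumes "\<theta> \<in> Th m" "s < m" "t < m"
  shows "\<theta> s * cnj (\<theta> t) = (\<Prod>l<m. \<theta> l ^ (1 * of_bool (l = s) + 3 * of_bool (l = t)))"
  using assms
  by (simp only: power_add prod.distrib pw_delta cnj_Rph Th_mem) simp

lemma four_cond:
  assumes "s < m" "t < m" "s' < m" "t' < m"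
  shows "(\<forall>l<m. 4 dvd (3 * of_bool (l = s) + 1 * of_bool (l = t) + 1 * of_bool (l = s') + 3 * of_bool (l = t') :: nat))
     \<longleftrightarrow> (s = s' \<and> t = t') \<or> (s = t \<and> s' = t')"
proof
  assume h: "\<forall>l<m. 4 dvd (3 * of_bool (l = s) + 1 * of_bool (l = t) + 1 * of_bool (l = s') + 3 * of_bool (l = t') :: nat)"
  have a: "4 dvd (3 * of_bool (s = s) + 1 * of_bool (s = t) + 1 * of_bool (s = s') + 3 * of_bool (s = t') :: nat)"
    using h assms by blast
  have b: "4 dvd (3 * of_bool (t = s) + 1 * of_bool (t = t) + 1 * of_bool (t = s') + 3 * of_bool (t = t') :: nat)"
    using h assms by blast
  have c: "4 dvd (3 * of_bool (s' = s) + 1 * of_bool (s' = t) + 1 * of_bool (s' = s') + 3 * of_bool (s' = t') :: nat)"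
    using h assms by blast
  show "(s = s' \<and> t = t') \<or> (s = t \<and> s' = t')"
    using a b c by (cases "s = t"; cases "s = s'"; cases "s = t'"; cases "t = s'"; cases "t = t'"; cases "s' = t'") auto
next
  assume "(s = s' \<and> t = t') \<or> (s = t \<and> s' = t')"
  then show "\<forall>l<m. 4 dvd (3 * of_bool (l = s) + 1 * of_bool (l = t) + 1 * of_bool (l = s') + 3 * of_bool (l = t') :: nat)"
    by auto
qed

lemma four_sum:
  assumes "s < m" "t < m" "s' < m" "t' < m"
  shows "(\<Sum>\<theta>\<in>Th m. cnj (\<theta> s) * \<theta> t * \<theta> s' * cnj (\<theta> t')) =
     (if (s = s' \<and> t = t') \<or> (s = t \<and> s' = t') then 4 ^ m else 0)"
proof -
  have "(\<Sum>\<theta>\<in>Th m. cnj (\<theta> s) * \<theta> t * \<theta> s' * cnj (\<theta> t')) =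
     (\<Sum>\<theta>\<in>Th m. \<Prod>l<m. \<theta> l ^ (3 * of_bool (l = s) + 1 * of_bool (l = t) + 1 * of_bool (l = s') + 3 * of_bool (l = t')))"
    using assms by (intro sum.cong refl four_exp) auto
  also have "\<dots> = (if (s = s' \<and> t = t') \<or> (s = t \<and> s' = t') then 4 ^ m else 0)"
    by (subst phase_sum) (simp only: four_cond[OF assms])
  finally show ?thesis .
qed

lemma two_sum:
  assumes "s < m" "t < m"
  shows "(\<Sum>\<theta>\<in>Th m. \<theta> s * cnj (\<theta> t)) = (if s = t then 4 ^ m else 0)"
proof -
  have "(\<Sum>\<theta>\<in>Th m. \<theta> s * cnj (\<theta> t)) =
     (\<Sum>\<theta>\<in>Th m. \<Prod>l<m. \<theta> l ^ (1 * of_bool (l = s) + 3 * of_bool (l = t)))"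
    using assms by (intro sum.cong refl two_exp) auto
  also have "\<dots> = (if s = t then 4 ^ m else 0)"
  proof -
    have "(\<forall>l<m. 4 dvd (1 * of_bool (l = s) + 3 * of_bool (l = t) :: nat)) \<longleftrightarrow> s = t"
    proof
      assume "\<forall>l<m. 4 dvd (1 * of_bool (l = s) + 3 * of_bool (l = t) :: nat)"
      then have "4 dvd (1 * of_bool (s = s) + 3 * of_bool (s = t) :: nat)" using assms by blast
      then show "s = t" by (cases "s = t") auto
    qed auto
    then show ?thesis by (subst phase_sum) simp
  qed
  finally show ?thesis .
qed

lemma sum_ifdelta:
  fixes f :: "nat \<Rightarrow> complex"
  assumes "finite S"
  shows "(\<Sum>t'\<in>S. (if t = t' then c else 0) * f t') = (if t \<in> S then c * f t else 0)"
proof -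
  have "(\<Sum>t'\<in>S. (if t = t' then c else 0) * f t') = (\<Sum>t'\<in>S. if t' = t then c * f t else 0)"
    by (intro sum.cong) auto
  then show ?thesis using assms by (simp add: sum.delta)
qed

lemma inner_delta:
  fixes e G :: "nat \<Rightarrow> nat \<Rightarrow> complex"
  assumes "s < m" "t < m"
  shows "(\<Sum>s'<m. \<Sum>t'<m. (if (s = s' \<and> t = t') \<or> (s = t \<and> s' = t') then c else 0) * e s t * G s' t')
       = c * (if s = t then e s s * (\<Sum>s'<m. G s' s') else e s t * G s t)"
proof (cases "s = t")
  case True
  then have "(\<Sum>s'<m. \<Sum>t'<m. (if (s = s' \<and> t = t') \<or> (s = t \<and> s' = t') then c else 0) * e s t * G s' t')
     = (\<Sum>s'<m. \<Sum>t'<m. (if s' = t' then c * e s s * G s' t' else 0))"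
    by (intro sum.cong refl) auto
  also have "\<dots> = (\<Sum>s'<m. c * e s s * G s' s')"
    by (intro sum.cong refl) (simp add: sum.delta)
  finally show ?thesis using True by (simp add: sum_distrib_left mult.assoc)
next
  case False
  have "\<And>s'. (\<Sum>t'<m. (if (s = s' \<and> t = t') \<or> (s = t \<and> s' = t') then c else 0) * e s t * G s' t')
     = (if s' = s then c * e s t * G s t else 0)"
  proof -
    fix s'
    show "(\<Sum>t'<m. (if (s = s' \<and> t = t') \<or> (s = t \<and> s' = t') then c else 0) * e s t * G s' t')
     = (if s' = s then c * e s t * G s t else 0)"
    proof (cases "s' = s")
      case True
      then have "(\<Sum>t'<m. (if (s = s' \<and> t = t') \<or> (s = t \<and> s' = t') then c else 0) * e s t * G s' t')
         = (\<Sum>t'<m. (if t = t' then c else 0) * (e s t * G s t'))"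
        using False by (intro sum.cong) (auto simp: mult.assoc)
      then show ?thesis using True assms by (simp add: sum_ifdelta mult.assoc)
    qed (use False in auto)
  qed
  then have "(\<Sum>s'<m. \<Sum>t'<m. (if (s = s' \<and> t = t') \<or> (s = t \<and> s' = t') then c else 0) * e s t * G s' t')
     = (\<Sum>s'<m. if s' = s then c * e s t * G s t else 0)"
    by simp
  also have "\<dots> = c * e s t * G s t"
    using assms by (simp add: sum.delta)
  finally show ?thesis using False by simp
qed

lemma outer_rearr:
  fixes e G :: "nat \<Rightarrow> nat \<Rightarrow> complex"
  shows "(\<Sum>s<m. \<Sum>t<m. c * (if s = t then e s s * (\<Sum>s'<m. G s' s') else e s t * G s t))
     = c * ((\<Sum>s<m. \<Sum>t<m. e s t * G s t) + (\<Sum>s<m. \<Sum>s'\<in>{..<m}-{s}. e s s * G s' s'))"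
proof -
  have "(\<Sum>t<m. (if s = t then e s s * (\<Sum>s'<m. G s' s') else e s t * G s t))
      = (\<Sum>t<m. e s t * G s t) + (\<Sum>s'\<in>{..<m}-{s}. e s s * G s' s')" if "s < m" for s
  proof -
    have h1: "(\<Sum>t<m. (if s = t then e s s * (\<Sum>s'<m. G s' s') else e s t * G s t))
       = e s s * (\<Sum>s'<m. G s' s') + (\<Sum>t\<in>{..<m}-{s}. e s t * G s t)"
      using that by (subst sum.remove[of _ s]) (auto intro!: sum.cong)
    have h2: "(\<Sum>s'<m. G s' s') = G s s + (\<Sum>s'\<in>{..<m}-{s}. G s' s')"
      using that by (subst sum.remove[of _ s]) auto
    have h3: "(\<Sum>t<m. e s t * G s t) = e s s * G s s + (\<Sum>t\<in>{..<m}-{s}. e s t * G s t)"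
      using that by (subst sum.remove[of _ s]) auto
    show ?thesis by (subst h1, simp only: h2 h3) (simp add: algebra_simps sum_distrib_left)
  qed
  then show ?thesis
    by (simp add: sum_distrib_left[symmetric] sum.distrib)
qed

lemma phase_identity:
  fixes e G :: "nat \<Rightarrow> nat \<Rightarrow> complex"
  shows "(\<Sum>\<theta>\<in>Th m. \<Sum>s<m. \<Sum>t<m. \<Sum>s'<m. \<Sum>t'<m. cnj (\<theta> s) * \<theta> t * \<theta> s' * cnj (\<theta> t') * e s t * G s' t')
     = 4 ^ m * ((\<Sum>s<m. \<Sum>t<m. e s t * G s t) + (\<Sum>s<m. \<Sum>s'\<in>{..<m}-{s}. e s s * G s' s'))"
proof -
  have "(\<Sum>\<theta>\<in>Th m. \<Sum>s<m. \<Sum>t<m. \<Sum>s'<m. \<Sum>t'<m. cnj (\<theta> s) * \<theta> t * \<theta> s' * cnj (\<theta> t') * e s t * G s' t')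
     = (\<Sum>s<m. \<Sum>t<m. \<Sum>s'<m. \<Sum>t'<m. (\<Sum>\<theta>\<in>Th m. cnj (\<theta> s) * \<theta> t * \<theta> s' * cnj (\<theta> t')) * e s t * G s' t')"
    by (simp add: sum_distrib_right sum.swap[of _ "Th m"])
  also have "\<dots> = (\<Sum>s<m. \<Sum>t<m. \<Sum>s'<m. \<Sum>t'<m. (if (s = s' \<and> t = t') \<or> (s = t \<and> s' = t') then 4 ^ m else 0) * e s t * G s' t')"
    by (intro sum.cong refl, subst four_sum) auto
  also have "\<dots> = (\<Sum>s<m. \<Sum>t<m. 4 ^ m * (if s = t then e s s * (\<Sum>s'<m. G s' s') else e s t * G s t))"
    by (intro sum.cong refl inner_delta) auto
  also have "\<dots> = 4 ^ m * ((\<Sum>s<m. \<Sum>t<m. e s t * G s t) + (\<Sum>s<m. \<Sum>s'\<in>{..<m}-{s}. e s s * G s' s'))"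
    by (rule outer_rearr)
  finally show ?thesis .
qed

definition psiT :: "nat \<Rightarrow> nat \<Rightarrow> ((nat \<Rightarrow> nat) \<Rightarrow> complex) \<Rightarrow> (nat \<Rightarrow> complex) \<Rightarrow> ((nat \<Rightarrow> nat) \<Rightarrow> complex)" where
  "psiT p m \<psi> \<theta> = (\<lambda>i. \<Sum>s<m. cnj (\<theta> s) * sl p s \<psi> i)"

lemma texp_peel:
  fixes F :: "nat \<Rightarrow> nat \<Rightarrow> nat \<Rightarrow> complex"
  assumes "p < k" "m = n p"
  shows "(\<Sum>\<theta>\<in>Th m. texp2 k (n(p:=1)) (psiT p m \<psi> \<theta>) (psiT p m \<psi> \<theta>)
            (F(p:=\<lambda>_ _. \<Sum>s<m. \<Sum>t<m. cnj (\<theta> s) * F p s t * \<theta> t)))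
     = 4 ^ m * (texp2 k n \<psi> \<psi> F + (\<Sum>s<m. \<Sum>s'\<in>{..<m}-{s}.
            texp2 k (n(p:=1)) (sl p s' \<psi>) (sl p s' \<psi>) (F(p:=\<lambda>_ _. F p s s))))"
proof -
  define G where "G s' t' = texp2 k (n(p:=1)) (sl p s' \<psi>) (sl p t' \<psi>) (F(p:=\<lambda>_ _. 1))" for s' t'
  have t1: "texp2 k (n(p:=1)) (psiT p m \<psi> \<theta>) (psiT p m \<psi> \<theta>)
            (F(p:=\<lambda>_ _. \<Sum>s<m. \<Sum>t<m. cnj (\<theta> s) * F p s t * \<theta> t))
      = (\<Sum>s<m. \<Sum>t<m. \<Sum>s'<m. \<Sum>t'<m. cnj (\<theta> s) * \<theta> t * \<theta> s' * cnj (\<theta> t') * F p s t * G s' t')" for \<theta>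
  proof -
    have "texp2 k (n(p:=1)) (psiT p m \<psi> \<theta>) (psiT p m \<psi> \<theta>)
            (F(p:=\<lambda>_ _. \<Sum>s<m. \<Sum>t<m. cnj (\<theta> s) * F p s t * \<theta> t))
       = (\<Sum>s<m. \<Sum>t<m. cnj (\<theta> s) * F p s t * \<theta> t) * texp2 k (n(p:=1)) (psiT p m \<psi> \<theta>) (psiT p m \<psi> \<theta>) (F(p:=\<lambda>_ _. 1))"
      by (rule texp2_scalar[OF assms(1)])
    also have "texp2 k (n(p:=1)) (psiT p m \<psi> \<theta>) (psiT p m \<psi> \<theta>) (F(p:=\<lambda>_ _. 1))
       = (\<Sum>s'<m. \<Sum>t'<m. cnj (cnj (\<theta> s')) * cnj (\<theta> t') * G s' t')"
      unfolding psiT_def G_def by (rule texp2_sesq) auto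
    also have "(\<Sum>s<m. \<Sum>t<m. cnj (\<theta> s) * F p s t * \<theta> t) * (\<Sum>s'<m. \<Sum>t'<m. cnj (cnj (\<theta> s')) * cnj (\<theta> t') * G s' t')
       = (\<Sum>s<m. \<Sum>t<m. \<Sum>s'<m. \<Sum>t'<m. (cnj (\<theta> s) * F p s t * \<theta> t) * (cnj (cnj (\<theta> s')) * cnj (\<theta> t') * G s' t'))"
      by (simp only: sum_distrib_right) (simp only: sum_distrib_left)
    also have "\<dots> = (\<Sum>s<m. \<Sum>t<m. \<Sum>s'<m. \<Sum>t'<m. cnj (\<theta> s) * \<theta> t * \<theta> s' * cnj (\<theta> t') * F p s t * G s' t')"
      by (intro sum.cong refl) (simp only: complex_cnj_cnj ac_simps)
    finally show ?thesis .
  qed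
  have e1: "(\<Sum>\<theta>\<in>Th m. texp2 k (n(p:=1)) (psiT p m \<psi> \<theta>) (psiT p m \<psi> \<theta>)
            (F(p:=\<lambda>_ _. \<Sum>s<m. \<Sum>t<m. cnj (\<theta> s) * F p s t * \<theta> t)))
     = 4 ^ m * ((\<Sum>s<m. \<Sum>t<m. F p s t * G s t) + (\<Sum>s<m. \<Sum>s'\<in>{..<m}-{s}. F p s s * G s' s'))"
    unfolding t1 by (rule phase_identity)
  have e2: "(\<Sum>s<m. \<Sum>t<m. F p s t * G s t) = texp2 k n \<psi> \<psi> F"
    using texp2_split[OF assms(1), of n \<psi> \<psi> F] by (simp only: G_def assms(2))
  have e3: "(\<Sum>s<m. \<Sum>s'\<in>{..<m}-{s}. F p s s * G s' s') = (\<Sum>s<m. \<Sum>s'\<in>{..<m}-{s}.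
            texp2 k (n(p:=1)) (sl p s' \<psi>) (sl p s' \<psi>) (F(p:=\<lambda>_ _. F p s s)))"
    unfolding G_def by (intro sum.cong refl) (rule texp2_scalar[OF assms(1), symmetric])
  show ?thesis unfolding e1 e2 e3 ..
qed

definition nrm :: "nat \<Rightarrow> (nat \<Rightarrow> nat) \<Rightarrow> ((nat \<Rightarrow> nat) \<Rightarrow> complex) \<Rightarrow> real" where
  "nrm k n \<phi> = (\<Sum>i\<in>Ix k n. (cmod (\<phi> i))\<^sup>2)"

lemma nrm_nonneg: "0 \<le> nrm k n \<phi>"
  unfolding nrm_def by (intro sum_nonneg) auto

lemma nrm_split: "p < k \<Longrightarrow> nrm k n \<psi> = (\<Sum>s<n p. nrm k (n(p:=1)) (sl p s \<psi>))"
  unfolding nrm_def sl_def by (rule sum_split)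

lemma cmod_sq_c: "complex_of_real ((cmod z)\<^sup>2) = cnj z * z"
  using complex_norm_square[of z] by (simp add: mult.commute)

lemma nrm_phase:
  assumes "p < k" "m = n p"
  shows "(\<Sum>\<theta>\<in>Th m. nrm k (n(p:=1)) (psiT p m \<psi> \<theta>)) = 4 ^ m * nrm k n \<psi>"
proof -
  have "complex_of_real (\<Sum>\<theta>\<in>Th m. (cmod (psiT p m \<psi> \<theta> i))\<^sup>2) = 4 ^ m * complex_of_real (\<Sum>s<m. (cmod (sl p s \<psi> i))\<^sup>2)" for i
  proof -
    have "complex_of_real (\<Sum>\<theta>\<in>Th m. (cmod (psiT p m \<psi> \<theta> i))\<^sup>2)
      = (\<Sum>\<theta>\<in>Th m. \<Sum>s<m. \<Sum>t<m. (\<theta> s * cnj (\<theta> t)) * (cnj (sl p s \<psi> i) * sl p t \<psi> i))"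
      unfolding of_real_sum cmod_sq_c psiT_def cnj_sum
      by (simp add: sum_distrib_left sum_distrib_right ac_simps, rule sum.cong[OF refl], rule sum.swap)
    also have "\<dots> = (\<Sum>s<m. \<Sum>t<m. (\<Sum>\<theta>\<in>Th m. \<theta> s * cnj (\<theta> t)) * (cnj (sl p s \<psi> i) * sl p t \<psi> i))"
      by (simp add: sum_distrib_right sum.swap[of _ "Th m"])
    also have "\<dots> = (\<Sum>s<m. \<Sum>t<m. (if s = t then 4 ^ m else 0) * (cnj (sl p s \<psi> i) * sl p t \<psi> i))"
      by (intro sum.cong refl, subst two_sum) auto
    also have "\<dots> = (\<Sum>s<m. 4 ^ m * (cnj (sl p s \<psi> i) * sl p s \<psi> i))"
      by (intro sum.cong refl) (subst sum_ifdelta, auto)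
    also have "\<dots> = 4 ^ m * complex_of_real (\<Sum>s<m. (cmod (sl p s \<psi> i))\<^sup>2)"
      unfolding of_real_sum cmod_sq_c by (simp add: sum_distrib_left)
    finally show ?thesis .
  qed
  note hc = this
  have h: "(\<Sum>\<theta>\<in>Th m. (cmod (psiT p m \<psi> \<theta> i))\<^sup>2) = 4 ^ m * (\<Sum>s<m. (cmod (sl p s \<psi> i))\<^sup>2)" for i
  proof -
    have "complex_of_real (\<Sum>\<theta>\<in>Th m. (cmod (psiT p m \<psi> \<theta> i))\<^sup>2) = complex_of_real (4 ^ m * (\<Sum>s<m. (cmod (sl p s \<psi> i))\<^sup>2))"
      using hc[of i] by simp
    then show ?thesis by (simp only: of_real_eq_iff)
  qed
  have "(\<Sum>\<theta>\<in>Th m. nrm k (n(p:=1)) (psiT p m \<psi> \<theta>)) = (\<Sum>i\<in>Ix k (n(p:=1)). \<Sum>\<theta>\<in>Th m. (cmod (psiT p m \<psi> \<theta> i))\<^sup>2)"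
    unfolding nrm_def by (rule sum.swap)
  also have "\<dots> = 4 ^ m * (\<Sum>s<m. \<Sum>i\<in>Ix k (n(p:=1)). (cmod (sl p s \<psi> i))\<^sup>2)"
    unfolding h by (simp add: sum_distrib_left sum.swap[of _ "{..<m}"])
  also have "\<dots> = 4 ^ m * nrm k n \<psi>"
    using nrm_split[OF assms(1), of n \<psi>] unfolding assms(2) nrm_def by simp
  finally show ?thesis .
qed

definition val :: "nat \<Rightarrow> (nat \<Rightarrow> 'q set) \<Rightarrow> (nat \<Rightarrow> 'a set) \<Rightarrow> ((nat \<Rightarrow> 'q) \<Rightarrow> (nat \<Rightarrow> 'a) \<Rightarrow> real)
   \<Rightarrow> (nat \<Rightarrow> nat) \<Rightarrow> ((nat \<Rightarrow> nat) \<Rightarrow> complex) \<Rightarrow> (nat \<Rightarrow> 'q \<Rightarrow> 'a \<Rightarrow> nat \<Rightarrow> nat \<Rightarrow> complex) \<Rightarrow> complex" where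
  "val k Q A M n \<psi> E = (\<Sum>x\<in>PiE {..<k} Q. \<Sum>a\<in>PiE {..<k} A.
      complex_of_real (M x a) * texp2 k n \<psi> \<psi> (\<lambda>q. E q (x q) (a q)))"

definition ET :: "nat \<Rightarrow> nat \<Rightarrow> (nat \<Rightarrow> 'q \<Rightarrow> 'a \<Rightarrow> nat \<Rightarrow> nat \<Rightarrow> complex) \<Rightarrow> (nat \<Rightarrow> complex)
   \<Rightarrow> (nat \<Rightarrow> 'q \<Rightarrow> 'a \<Rightarrow> nat \<Rightarrow> nat \<Rightarrow> complex)" where
  "ET p m E \<theta> = E(p := \<lambda>y b _ _. \<Sum>s<m. \<Sum>t<m. cnj (\<theta> s) * E p y b s t * \<theta> t)"

definition Ed :: "nat \<Rightarrow> (nat \<Rightarrow> 'q \<Rightarrow> 'a \<Rightarrow> nat \<Rightarrow> nat \<Rightarrow> complex) \<Rightarrow> nat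
   \<Rightarrow> (nat \<Rightarrow> 'q \<Rightarrow> 'a \<Rightarrow> nat \<Rightarrow> nat \<Rightarrow> complex)" where
  "Ed p E s = E(p := \<lambda>y b _ _. E p y b s s)"

lemma upd_app:
  "(\<lambda>q. (E(p := (\<lambda>y b _ _. C y b))) q (x q) (a q)) = (\<lambda>q. E q (x q) (a q))(p := \<lambda>_ _. C (x p) (a p))"
  by (rule ext) auto

lemma val_peel:
  assumes "p < k" "m = n p"
  shows "(\<Sum>\<theta>\<in>Th m. val k Q A M (n(p:=1)) (psiT p m \<psi> \<theta>) (ET p m E \<theta>))
     = 4 ^ m * (val k Q A M n \<psi> E + (\<Sum>s<m. \<Sum>s'\<in>{..<m}-{s}. val k Q A M (n(p:=1)) (sl p s' \<psi>) (Ed p E s)))"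
proof -
  have "(\<Sum>\<theta>\<in>Th m. val k Q A M (n(p:=1)) (psiT p m \<psi> \<theta>) (ET p m E \<theta>))
     = (\<Sum>x\<in>PiE {..<k} Q. \<Sum>a\<in>PiE {..<k} A. complex_of_real (M x a) *
          (\<Sum>\<theta>\<in>Th m. texp2 k (n(p:=1)) (psiT p m \<psi> \<theta>) (psiT p m \<psi> \<theta>)
            ((\<lambda>q. E q (x q) (a q))(p:=\<lambda>_ _. \<Sum>s<m. \<Sum>t<m. cnj (\<theta> s) * E p (x p) (a p) s t * \<theta> t))))"
    unfolding val_def ET_def upd_app
    by (simp add: sum_distrib_left sum.swap[of _ "Th m"])
  also have "\<dots> = (\<Sum>x\<in>PiE {..<k} Q. \<Sum>a\<in>PiE {..<k} A. complex_of_real (M x a) *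
          (4 ^ m * (texp2 k n \<psi> \<psi> (\<lambda>q. E q (x q) (a q)) + (\<Sum>s<m. \<Sum>s'\<in>{..<m}-{s}.
            texp2 k (n(p:=1)) (sl p s' \<psi>) (sl p s' \<psi>) ((\<lambda>q. E q (x q) (a q))(p:=\<lambda>_ _. E p (x p) (a p) s s))))))"
    by (intro sum.cong refl, subst texp_peel[where p=p and k=k and m=m and n=n, OF assms]) simp_all
  also have "\<dots> = 4 ^ m * (val k Q A M n \<psi> E + (\<Sum>s<m. \<Sum>s'\<in>{..<m}-{s}. val k Q A M (n(p:=1)) (sl p s' \<psi>) (Ed p E s)))"
    unfolding val_def Ed_def upd_app
    by (simp add: sum_distrib_left sum.distrib algebra_simps sum.swap[of _ "{..<m}"]
          sum.swap[of _ "{..<m} - {_}"])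
  finally show ?thesis .
qed

lemma psd_quad: "psd m A \<Longrightarrow> Im (\<Sum>i<m. \<Sum>j<m. cnj (v i) * A i j * v j) = 0 \<and> 0 \<le> Re (\<Sum>i<m. \<Sum>j<m. cnj (v i) * A i j * v j)"
  unfolding psd_def Let_def by blast

lemma sum_vec2:
  fixes f :: "nat \<Rightarrow> complex"
  assumes "i < m" "j < m" "i \<noteq> j"
  shows "(\<Sum>b<m. f b * ((if b = i then \<alpha> else 0) + (if b = j then \<beta> else 0))) = f i * \<alpha> + f j * \<beta>"
proof -
  have "(\<Sum>b<m. f b * ((if b = i then \<alpha> else 0) + (if b = j then \<beta> else 0)))
      = (\<Sum>b<m. (if b = i then f b * \<alpha> else 0) + (if b = j then f b * \<beta> else 0))"
    using assms by (intro sum.cong) auto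
  also have "\<dots> = f i * \<alpha> + f j * \<beta>" using assms by (simp add: sum.distrib sum.delta)
  finally show ?thesis .
qed

lemma sum_vec2':
  fixes g :: "nat \<Rightarrow> complex"
  assumes "i < m" "j < m" "i \<noteq> j"
  shows "(\<Sum>a<m. cnj ((if a = i then \<alpha> else 0) + (if a = j then \<beta> else 0)) * g a) = cnj \<alpha> * g i + cnj \<beta> * g j"
proof -
  have "(\<Sum>a<m. cnj ((if a = i then \<alpha> else 0) + (if a = j then \<beta> else 0)) * g a)
      = (\<Sum>a<m. (if a = i then cnj \<alpha> * g a else 0) + (if a = j then cnj \<beta> * g a else 0))"
    using assms by (intro sum.cong) auto
  also have "\<dots> = cnj \<alpha> * g i + cnj \<beta> * g j" using assms by (simp add: sum.distrib sum.delta)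
  finally show ?thesis .
qed

lemma quad2:
  fixes A :: "nat \<Rightarrow> nat \<Rightarrow> complex"
  assumes "i < m" "j < m" "i \<noteq> j"
  shows "(\<Sum>a<m. \<Sum>b<m. cnj ((if a = i then \<alpha> else 0) + (if a = j then \<beta> else 0)) * A a b *
            ((if b = i then \<alpha> else 0) + (if b = j then \<beta> else 0)))
       = cnj \<alpha> * \<alpha> * A i i + cnj \<alpha> * \<beta> * A i j + cnj \<beta> * \<alpha> * A j i + cnj \<beta> * \<beta> * A j j"
proof -
  have "(\<Sum>a<m. \<Sum>b<m. cnj ((if a = i then \<alpha> else 0) + (if a = j then \<beta> else 0)) * A a b *
            ((if b = i then \<alpha> else 0) + (if b = j then \<beta> else 0)))
     = (\<Sum>a<m. cnj ((if a = i then \<alpha> else 0) + (if a = j then \<beta> else 0)) *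
          (\<Sum>b<m. A a b * ((if b = i then \<alpha> else 0) + (if b = j then \<beta> else 0))))"
    by (simp add: sum_distrib_left mult.assoc)
  also have "\<dots> = (\<Sum>a<m. cnj ((if a = i then \<alpha> else 0) + (if a = j then \<beta> else 0)) * (A a i * \<alpha> + A a j * \<beta>))"
    using sum_vec2[OF assms] by simp
  also have "\<dots> = cnj \<alpha> * (A i i * \<alpha> + A i j * \<beta>) + cnj \<beta> * (A j i * \<alpha> + A j j * \<beta>)"
    by (rule sum_vec2'[OF assms])
  finally show ?thesis by (simp add: algebra_simps)
qed

lemma sum_vec1:
  fixes f :: "nat \<Rightarrow> complex"
  assumes "i < m"
  shows "(\<Sum>b<m. f b * (if b = i then 1 else 0)) = f i"
proof -
  have "(\<Sum>b<m. f b * (if b = i then 1 else 0)) = (\<Sum>b<m. if b = i then f b else 0)"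
    by (intro sum.cong) auto
  then show ?thesis using assms by (simp add: sum.delta)
qed

lemma quad1:
  fixes A :: "nat \<Rightarrow> nat \<Rightarrow> complex"
  assumes "i < m"
  shows "(\<Sum>a<m. \<Sum>b<m. cnj (if a = i then 1 else 0) * A a b * (if b = i then 1 else 0)) = A i i"
proof -
  have "(\<Sum>a<m. \<Sum>b<m. cnj (if a = i then 1 else 0) * A a b * (if b = i then 1 else 0))
     = (\<Sum>a<m. (\<Sum>b<m. A a b * (if b = i then 1 else 0)) * (if a = i then 1 else 0))"
    by (intro sum.cong refl) (auto simp: sum_distrib_left sum_distrib_right intro!: sum.cong)
  also have "\<dots> = (\<Sum>b<m. A i b * (if b = i then 1 else 0))"
    by (rule sum_vec1[OF assms])
  also have "\<dots> = A i i" by (rule sum_vec1[OF assms])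
  finally show ?thesis .
qed

lemma psd_diag: assumes "psd m A" "s < m" shows "Im (A s s) = 0" "0 \<le> Re (A s s)"
  using psd_quad[OF assms(1), of "\<lambda>x. if x = s then 1 else 0"] quad1[OF assms(2), of A] by auto

lemma psd_herm: assumes "psd m A" "i < m" "j < m" shows "A j i = cnj (A i j)"
proof (cases "i = j")
  case True then show ?thesis using psd_diag[OF assms(1,2)] by (simp add: complex_eq_iff)
next
  case False
  have h1: "Im (cnj 1 * 1 * A i i + cnj 1 * 1 * A i j + cnj 1 * 1 * A j i + cnj 1 * 1 * A j j) = 0"
    using psd_quad[OF assms(1), of "\<lambda>x. (if x = i then 1 else 0) + (if x = j then 1 else 0)"]
    unfolding quad2[OF assms(2,3) False, of 1 1 A] by blast
  have h2: "Im (cnj 1 * 1 * A i i + cnj 1 * \<i> * A i j + cnj \<i> * 1 * A j i + cnj \<i> * \<i> * A j j) = 0"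
    using psd_quad[OF assms(1), of "\<lambda>x. (if x = i then 1 else 0) + (if x = j then \<i> else 0)"]
    unfolding quad2[OF assms(2,3) False, of 1 \<i> A] by blast
  have "Im (A i i) = 0" "Im (A j j) = 0" using psd_diag assms by auto
  then show ?thesis using h1 h2 by (simp add: complex_eq_iff)
qed

lemma quad_Suc:
  fixes A :: "nat \<Rightarrow> nat \<Rightarrow> complex"
  shows "(\<Sum>i<Suc m. \<Sum>j<Suc m. cnj (v i) * A i j * v j) = (\<Sum>i<m. \<Sum>j<m. cnj (v i) * A i j * v j)
    + (\<Sum>i<m. cnj (v i) * A i m) * v m + cnj (v m) * (\<Sum>j<m. A m j * v j) + cnj (v m) * A m m * v m"
  by (simp add: sum.distrib sum_distrib_left sum_distrib_right algebra_simps)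

lemma quad_cong:
  fixes A :: "nat \<Rightarrow> nat \<Rightarrow> complex"
  assumes "\<And>i. i < m \<Longrightarrow> v i = w i"
  shows "(\<Sum>i<m. \<Sum>j<m. cnj (v i) * A i j * v j) = (\<Sum>i<m. \<Sum>j<m. cnj (w i) * A i j * w j)"
  using assms by (intro sum.cong refl) auto

lemma psd_restrict:
  assumes "psd (Suc m) A" shows "psd m A"
  unfolding psd_def Let_def
proof
  fix v :: "nat \<Rightarrow> complex"
  define w where "w x = (if x < m then v x else 0)" for x
  have "(\<Sum>i<Suc m. \<Sum>j<Suc m. cnj (w i) * A i j * w j) = (\<Sum>i<m. \<Sum>j<m. cnj (v i) * A i j * v j)"
    unfolding quad_Suc by (simp add: w_def quad_cong[of m w v])
  then show "Im (\<Sum>i<m. \<Sum>j<m. cnj (v i) * A i j * v j) = 0 \<and> 0 \<le> Re (\<Sum>i<m. \<Sum>j<m. cnj (v i) * A i j * v j)"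
    using psd_quad[OF assms, of w] by simp
qed

lemma zero_col:
  assumes psd: "psd (Suc m) A" and z: "A m m = 0" and i: "i < m"
  shows "A i m = 0"
proof -
  define c where "c = A i m"
  define a where "a = Re (A i i)"
  have a0: "0 \<le> a" and ai: "A i i = of_real a"
    using psd_diag[OF psd, of i] i unfolding a_def by (auto simp: complex_eq_iff)
  have hm: "A m i = cnj c" unfolding c_def using psd_herm[OF psd, of i m] i by simp
  define r where "r = 1 / (a + 1)"
  have r0: "0 < r" unfolding r_def using a0 by simp
  have ra: "r * a < 1" unfolding r_def using a0 by (simp add: field_simps)
  define t where "t = - complex_of_real r * c"
  have i1: "i < Suc m" and i2: "m < Suc m" and i3: "i \<noteq> m" using i by auto
  have q: "Re (cnj t * t * A i i + cnj t * 1 * A i m + cnj 1 * t * A m i + cnj 1 * 1 * A m m) \<ge> 0"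
    using psd_quad[OF psd, of "\<lambda>x. (if x = i then t else 0) + (if x = m then 1 else 0)"]
    unfolding quad2[of i "Suc m" m t 1 A, OF i1 i2 i3] by blast
  have e: "cnj t * t * A i i + cnj t * 1 * A i m + cnj 1 * t * A m i + cnj 1 * 1 * A m m
     = complex_of_real ((r * r * a - 2 * r) * (cmod c)\<^sup>2)"
    unfolding t_def ai z hm c_def[symmetric] using complex_norm_square[of c]
    by (simp add: algebra_simps power2_eq_square)
  have "0 \<le> (r * r * a - 2 * r) * (cmod c)\<^sup>2" using q unfolding e by simp
  moreover have "r * r * a - 2 * r < 0"
  proof -
    have "r * (r * a - 2) < 0" using r0 ra by (intro mult_pos_neg) auto
    then show ?thesis by (simp add: algebra_simps)
  qed
  moreover note this_le = \<open>0 \<le> (r * r * a - 2 * r) * (cmod c)\<^sup>2\<close>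
  ultimately have "(r * r * a - 2 * r) * (cmod c)\<^sup>2 \<le> 0"
    by (intro mult_nonpos_nonneg) auto
  with this_le have "(r * r * a - 2 * r) * (cmod c)\<^sup>2 = 0" by linarith
  with \<open>r * r * a - 2 * r < 0\<close> have "(cmod c)\<^sup>2 = 0"
    by (metis less_irrefl mult_eq_0_iff)
  then show ?thesis unfolding c_def by simp
qed

lemma schur_psd:
  assumes psd: "psd (Suc m) A" and a: "A m m = complex_of_real a" "a > 0"
  shows "psd m (\<lambda>i j. A i j - A i m * A m j / A m m)"
  unfolding psd_def Let_def
proof
  fix v :: "nat \<Rightarrow> complex"
  define \<beta> where "\<beta> = (\<Sum>j<m. A m j * v j)"
  define u where "u = - \<beta> / A m m"
  define w where "w x = (if x < m then v x else u)" for x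
  have g: "(\<Sum>i<m. cnj (v i) * A i m) = cnj \<beta>"
    unfolding \<beta>_def cnj_sum using psd_herm[OF psd, of m] by (intro sum.cong refl) (simp add: mult.commute)
  have Q': "(\<Sum>i<Suc m. \<Sum>j<Suc m. cnj (w i) * A i j * w j)
     = (\<Sum>i<m. \<Sum>j<m. cnj (v i) * A i j * v j) + cnj \<beta> * u + cnj u * \<beta> + cnj u * A m m * u"
    unfolding quad_Suc by (simp add: w_def quad_cong[of m w v] g \<beta>_def)
  have QB: "(\<Sum>i<m. \<Sum>j<m. cnj (v i) * (A i j - A i m * A m j / A m m) * v j)
     = (\<Sum>i<m. \<Sum>j<m. cnj (v i) * A i j * v j) - cnj \<beta> * \<beta> / A m m"
  proof -
    have "(\<Sum>i<m. \<Sum>j<m. cnj (v i) * (A i j - A i m * A m j / A m m) * v j)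
       = (\<Sum>i<m. \<Sum>j<m. cnj (v i) * A i j * v j) - (\<Sum>i<m. \<Sum>j<m. (cnj (v i) * A i m) * (A m j * v j)) / A m m"
      by (simp add: algebra_simps sum_subtractf sum_divide_distrib)
    also have "(\<Sum>i<m. \<Sum>j<m. (cnj (v i) * A i m) * (A m j * v j)) = (\<Sum>i<m. cnj (v i) * A i m) * (\<Sum>j<m. A m j * v j)"
      by (simp add: sum_product)
    also have "\<dots> = cnj \<beta> * \<beta>" unfolding g \<beta>_def ..
    finally show ?thesis .
  qed
  have "(\<Sum>i<Suc m. \<Sum>j<Suc m. cnj (w i) * A i j * w j)
     = (\<Sum>i<m. \<Sum>j<m. cnj (v i) * (A i j - A i m * A m j / A m m) * v j)"
    unfolding Q' QB u_def using a by (simp add: field_simps)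
  then show "Im (\<Sum>i<m. \<Sum>j<m. cnj (v i) * (A i j - A i m * A m j / A m m) * v j) = 0 \<and>
      0 \<le> Re (\<Sum>i<m. \<Sum>j<m. cnj (v i) * (A i j - A i m * A m j / A m m) * v j)"
    using psd_quad[OF psd, of w] by simp
qed

lemma gram: "psd m A \<Longrightarrow> \<exists>w. \<forall>i<m. \<forall>j<m. A i j = (\<Sum>r<m. w r i * cnj (w r j))"
proof (induction m arbitrary: A)
  case 0
  then show ?case by simp
next
  case (Suc m)
  note psd = Suc.prems
  define a where "a = Re (A m m)"
  have a0: "0 \<le> a" and am: "A m m = complex_of_real a"
    using psd_diag[OF psd, of m] unfolding a_def by (auto simp: complex_eq_iff)
  have herm: "\<And>i j. i < Suc m \<Longrightarrow> j < Suc m \<Longrightarrow> A j i = cnj (A i j)" using psd_herm[OF psd] by blast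
  show ?case
  proof (cases "a = 0")
    case True
    have col: "A i m = 0" if "i < m" for i using zero_col[OF psd _ that] am True by simp
    have row: "A m i = 0" if "i < m" for i using herm[of i m] col[OF that] that by simp
    obtain w where w: "\<forall>i<m. \<forall>j<m. A i j = (\<Sum>r<m. w r i * cnj (w r j))"
      using Suc.IH[OF psd_restrict[OF psd]] by blast
    define w' where "w' r i = (if r < m \<and> i < m then w r i else 0)" for r i
    have "A i j = (\<Sum>r<Suc m. w' r i * cnj (w' r j))" if "i < Suc m" "j < Suc m" for i j
    proof (cases "i < m \<and> j < m")
      case True
      then show ?thesis using w by (simp add: w'_def)
    next
      case False
      then have "A i j = 0" using that col row am \<open>a = 0\<close> by (auto simp: less_Suc_eq)
      then show ?thesis using False by (cases "i < m") (auto simp: w'_def)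
    qed
    then show ?thesis by blast
  next
    case False
    then have apos: "a > 0" using a0 by simp
    define B where "B i j = A i j - A i m * A m j / A m m" for i j
    obtain w where w: "\<forall>i<m. \<forall>j<m. B i j = (\<Sum>r<m. w r i * cnj (w r j))"
      using Suc.IH[OF schur_psd[OF psd am apos]] unfolding B_def by blast
    define w' where "w' r i = (if r < m then (if i < m then w r i else 0) else A i m / complex_of_real (sqrt a))" for r i
    have last: "w' m i * cnj (w' m j) = A i m * A m j / A m m" if "i < Suc m" "j < Suc m" for i j
    proof -
      have "w' m i * cnj (w' m j) = A i m * cnj (A j m) / (complex_of_real (sqrt a) * complex_of_real (sqrt a))"
        by (simp add: w'_def)
      also have "complex_of_real (sqrt a) * complex_of_real (sqrt a) = A m m"
        using a0 am by (simp flip: of_real_mult)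
      also have "cnj (A j m) = A m j" using herm[of m j] that by simp
      finally show ?thesis .
    qed
    have "A i j = (\<Sum>r<Suc m. w' r i * cnj (w' r j))" if "i < Suc m" "j < Suc m" for i j
    proof -
      have "(\<Sum>r<Suc m. w' r i * cnj (w' r j)) = (\<Sum>r<m. w' r i * cnj (w' r j)) + A i m * A m j / A m m"
        using last[OF that] by simp
      also have "(\<Sum>r<m. w' r i * cnj (w' r j)) = (if i < m \<and> j < m then B i j else 0)"
        using w by (auto simp: w'_def)
      finally show ?thesis
        using that am apos by (auto simp: B_def less_Suc_eq)
    qed
    then show ?thesis by blast
  qed
qed

definition z0 :: "nat \<Rightarrow> nat \<Rightarrow> nat" where "z0 k = (\<lambda>i\<in>{..<k}. 0)"

lemma Ix_ones: assumes "\<forall>q<k. n q = 1" shows "Ix k n = {z0 k}"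
  unfolding Ix_def z0_def by (subst PiE_eq_singleton) (use assms in auto)

lemma z0_app: "q < k \<Longrightarrow> z0 k q = 0" unfolding z0_def by simp

lemma texp_ones:
  assumes "\<forall>q<k. n q = 1"
  shows "texp2 k n \<phi> \<chi> F = cnj (\<phi> (z0 k)) * (\<Prod>q<k. F q 0 0) * \<chi> (z0 k)"
proof -
  have "(\<Prod>q<k. F q (z0 k q) (z0 k q)) = (\<Prod>q<k. F q 0 0)" by (intro prod.cong) (auto simp: z0_app)
  then show ?thesis unfolding texp2_def Ix_ones[OF assms] by simp
qed

lemma nrm_ones:
  assumes "\<forall>q<k. n q = 1"
  shows "nrm k n \<phi> = (cmod (\<phi> (z0 k)))\<^sup>2"
  unfolding nrm_def Ix_ones[OF assms] by simp

lemma real_prod: "(\<And>q. q \<in> S \<Longrightarrow> Im (f q) = 0) \<Longrightarrow> prod f S = complex_of_real (\<Prod>q\<in>S. Re (f q))"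
proof -
  assume h: "\<And>q. q \<in> S \<Longrightarrow> Im (f q) = 0"
  have "prod f S = (\<Prod>q\<in>S. complex_of_real (Re (f q)))" using h by (intro prod.cong) (auto simp: complex_eq_iff)
  then show ?thesis by simp
qed

lemma rnn_sum: "(\<And>x. x \<in> S \<Longrightarrow> Im (f x) = 0 \<and> 0 \<le> Re (f x)) \<Longrightarrow> Im (sum f S) = 0 \<and> 0 \<le> Re (sum f S)"
  by (auto simp: Im_sum Re_sum intro: sum_nonneg)

lemma psd_trace:
  assumes "psd m A" "psd m G"
  shows "Im (\<Sum>s<m. \<Sum>t<m. A s t * G s t) = 0 \<and> 0 \<le> Re (\<Sum>s<m. \<Sum>t<m. A s t * G s t)"
proof -
  obtain w where w: "\<forall>i<m. \<forall>j<m. A i j = (\<Sum>r<m. w r i * cnj (w r j))" using gram[OF assms(1)] by blast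
  have "(\<Sum>s<m. \<Sum>t<m. A s t * G s t) = (\<Sum>s<m. \<Sum>t<m. \<Sum>r<m. w r s * cnj (w r t) * G s t)"
    using w by (intro sum.cong refl) (simp add: sum_distrib_right)
  also have "\<dots> = (\<Sum>s<m. \<Sum>r<m. \<Sum>t<m. w r s * cnj (w r t) * G s t)"
  proof (rule sum.cong[OF refl])
    fix s show "(\<Sum>t<m. \<Sum>r<m. w r s * cnj (w r t) * G s t) = (\<Sum>r<m. \<Sum>t<m. w r s * cnj (w r t) * G s t)"
      by (rule sum.swap[of "\<lambda>t r. w r s * cnj (w r t) * G s t" "{..<m}" "{..<m}"])
  qed
  also have "\<dots> = (\<Sum>r<m. \<Sum>s<m. \<Sum>t<m. w r s * cnj (w r t) * G s t)"
    by (rule sum.swap)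
  also have "\<dots> = (\<Sum>r<m. \<Sum>s<m. \<Sum>t<m. cnj (cnj (w r s)) * G s t * cnj (w r t))"
    by (intro sum.cong refl) (simp only: complex_cnj_cnj ac_simps)
  finally have e: "(\<Sum>s<m. \<Sum>t<m. A s t * G s t) = (\<Sum>r<m. \<Sum>s<m. \<Sum>t<m. cnj (cnj (w r s)) * G s t * cnj (w r t))" .
  show ?thesis unfolding e
    by (rule rnn_sum, rule psd_quad[OF assms(2)])
qed

lemma psd_one: assumes "Im c = 0" "0 \<le> Re c" shows "psd 1 (\<lambda>_ _. c)"
  unfolding psd_def Let_def
proof
  fix v :: "nat \<Rightarrow> complex"
  have "(\<Sum>i<1. \<Sum>j<1. cnj (v i) * c * v j) = (cnj (v 0) * v 0) * c"
    by (simp add: ac_simps)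
  also have "\<dots> = complex_of_real ((cmod (v 0))\<^sup>2) * c" by (simp only: cmod_sq_c)
  finally have e: "(\<Sum>i<1. \<Sum>j<1. cnj (v i) * c * v j) = complex_of_real ((cmod (v 0))\<^sup>2) * c" .
  then show "Im (\<Sum>i<1. \<Sum>j<1. cnj (v i) * c * v j) = 0 \<and> 0 \<le> Re (\<Sum>i<1. \<Sum>j<1. cnj (v i) * c * v j)"
    unfolding e using assms by simp
qed

lemma sum_upd_less:
  fixes n :: "nat \<Rightarrow> nat"
  assumes "p < k" "n p \<ge> 2"
  shows "(\<Sum>q<k. (n(p:=1)) q) < (\<Sum>q<k. n q)"
proof -
  have "(\<Sum>q<k. (n(p:=1)) q) = 1 + (\<Sum>q\<in>{..<k}-{p}. n q)"
    using assms by (subst sum.remove[of _ p]) (auto intro!: sum.cong)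
  moreover have "(\<Sum>q<k. n q) = n p + (\<Sum>q\<in>{..<k}-{p}. n q)"
    using assms by (subst sum.remove[of _ p]) auto
  ultimately show ?thesis using assms by simp
qed

lemma G_psd:
  assumes "p < k"
    and IH: "\<And>\<phi>. Im (texp2 k (n(p:=1)) \<phi> \<phi> (F(p:=\<lambda>_ _. 1))) = 0 \<and> 0 \<le> Re (texp2 k (n(p:=1)) \<phi> \<phi> (F(p:=\<lambda>_ _. 1)))"
  shows "psd m (\<lambda>s t. texp2 k (n(p:=1)) (sl p s \<psi>) (sl p t \<psi>) (F(p:=\<lambda>_ _. 1)))"
  unfolding psd_def Let_def
proof
  fix v :: "nat \<Rightarrow> complex"
  have "texp2 k (n(p:=1)) (\<lambda>i. \<Sum>s<m. v s * sl p s \<psi> i) (\<lambda>i. \<Sum>t<m. v t * sl p t \<psi> i) (F(p:=\<lambda>_ _. 1))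
      = (\<Sum>s<m. \<Sum>t<m. cnj (v s) * v t * texp2 k (n(p:=1)) (sl p s \<psi>) (sl p t \<psi>) (F(p:=\<lambda>_ _. 1)))"
    by (rule texp2_sesq) auto
  also have "\<dots> = (\<Sum>s<m. \<Sum>t<m. cnj (v s) * texp2 k (n(p:=1)) (sl p s \<psi>) (sl p t \<psi>) (F(p:=\<lambda>_ _. 1)) * v t)"
    by (simp only: ac_simps)
  finally show "Im (\<Sum>s<m. \<Sum>t<m. cnj (v s) * texp2 k (n(p:=1)) (sl p s \<psi>) (sl p t \<psi>) (F(p:=\<lambda>_ _. 1)) * v t) = 0 \<and>
       0 \<le> Re (\<Sum>s<m. \<Sum>t<m. cnj (v s) * texp2 k (n(p:=1)) (sl p s \<psi>) (sl p t \<psi>) (F(p:=\<lambda>_ _. 1)) * v t)"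
    using IH by metis
qed

lemma texp_pos:
  "(\<forall>q<k. 1 \<le> n q \<and> psd (n q) (F q)) \<Longrightarrow> Im (texp2 k n \<psi> \<psi> F) = 0 \<and> 0 \<le> Re (texp2 k n \<psi> \<psi> F)"
proof (induction "\<Sum>q<k. n q" arbitrary: n F \<psi> rule: less_induct)
  case less
  show ?case
  proof (cases "\<exists>p<k. n p \<noteq> 1")
    case True
    then obtain p where p: "p < k" "n p \<noteq> 1" by blast
    then have p2: "n p \<ge> 2" using less.prems by force
    have IH: "Im (texp2 k (n(p:=1)) \<phi> \<phi> (F(p:=\<lambda>_ _. 1))) = 0 \<and> 0 \<le> Re (texp2 k (n(p:=1)) \<phi> \<phi> (F(p:=\<lambda>_ _. 1)))" for \<phi>
    proof (rule less.hyps[OF sum_upd_less[where n=n, OF p(1) p2]])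
      show "\<forall>q<k. 1 \<le> (n(p:=1)) q \<and> psd ((n(p:=1)) q) ((F(p:=\<lambda>_ _. 1)) q)"
        using less.prems psd_one[of 1] by auto
    qed
    show ?thesis unfolding texp2_split[OF p(1), of n]
    proof (rule psd_trace)
      show "psd (n p) (F p)" using less.prems p by auto
      show "psd (n p) (\<lambda>s t. texp2 k (n(p := 1)) (sl p s \<psi>) (sl p t \<psi>) (F(p := \<lambda>_ _. 1)))"
        by (rule G_psd[OF p(1) IH])
    qed
  next
    case False
    then have ones: "\<forall>q<k. n q = 1" by auto
    have pr: "(\<Prod>q<k. F q 0 0) = complex_of_real (\<Prod>q<k. Re (F q 0 0))"
      using less.prems ones psd_diag[of 1 "F _" 0] by (intro real_prod) auto
    have nn: "0 \<le> (\<Prod>q<k. Re (F q 0 0))"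
      using less.prems ones psd_diag[of 1 "F _" 0] by (intro prod_nonneg) auto
    have e: "cnj (\<psi> (z0 k)) * complex_of_real (\<Prod>q<k. Re (F q 0 0)) * \<psi> (z0 k)
        = complex_of_real ((\<Prod>q<k. Re (F q 0 0)) * (cmod (\<psi> (z0 k)))\<^sup>2)"
      by (simp only: of_real_mult cmod_sq_c) (simp only: ac_simps)
    show ?thesis unfolding texp_ones[OF ones] pr e Im_complex_of_real Re_complex_of_real using nn by simp
  qed
qed

definition ETs :: "nat \<Rightarrow> nat \<Rightarrow> (nat \<Rightarrow> 'q \<Rightarrow> 'a \<Rightarrow> nat \<Rightarrow> nat \<Rightarrow> complex) \<Rightarrow> (nat \<Rightarrow> complex)
   \<Rightarrow> (nat \<Rightarrow> 'q \<Rightarrow> 'a \<Rightarrow> nat \<Rightarrow> nat \<Rightarrow> complex)" where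
  "ETs p m E \<theta> = E(p := \<lambda>y b _ _. (\<Sum>s<m. \<Sum>t<m. cnj (\<theta> s) * E p y b s t * \<theta> t) / of_nat m)"

lemma val_scale:
  assumes p: "p < k" and m: "m > 0"
  shows "val k Q A M n \<phi> (ET p m E \<theta>) = of_nat m * val k Q A M n \<phi> (ETs p m E \<theta>)"
proof -
  have h: "complex_of_real (M x a) * texp2 k n \<phi> \<phi> ((\<lambda>q. E q (x q) (a q))(p := \<lambda>_ _. C))
      = of_nat m * (complex_of_real (M x a) * texp2 k n \<phi> \<phi> ((\<lambda>q. E q (x q) (a q))(p := \<lambda>_ _. C / of_nat m)))"
    for x a C
    using m by (simp only: texp2_scalar[OF p, of n \<phi> \<phi> "\<lambda>q. E q (x q) (a q)" C]
        texp2_scalar[OF p, of n \<phi> \<phi> "\<lambda>q. E q (x q) (a q)" "C / of_nat m"]) simp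
  show ?thesis
    unfolding val_def ET_def ETs_def upd_app sum_distrib_left by (intro sum.cong refl h)
qed

lemma Rph_norm: "c \<in> Rph \<Longrightarrow> cnj c * c = 1"
  unfolding Rph_def by auto

lemma povm_ETs:
  assumes th: "\<theta> \<in> Th m" and m: "m > 0" and pv: "povm m B (E p y)" and fin: "finite B"
  shows "povm 1 B ((ETs p m E \<theta>) p y)"
  unfolding povm_def
proof (intro conjI ballI allI impI)
  fix b assume b: "b \<in> B"
  have "psd m (E p y b)" using pv b unfolding povm_def by auto
  from psd_quad[OF this, of \<theta>]
  have "psd 1 (\<lambda>_ _. (\<Sum>s<m. \<Sum>t<m. cnj (\<theta> s) * E p y b s t * \<theta> t) / of_nat m)"
    using m by (intro psd_one) (simp_all add: Im_divide_of_nat Re_divide_of_nat)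
  then show "psd 1 ((ETs p m E \<theta>) p y b)"
    unfolding ETs_def by simp
next
  fix i j :: nat assume "i < 1" "j < 1"
  then have ij: "i = 0" "j = 0" by auto
  have id: "(\<Sum>b\<in>B. E p y b s t) = (if s = t then 1 else 0)" if "s < m" "t < m" for s t
    using pv that unfolding povm_def by auto
  have "(\<Sum>b\<in>B. (\<Sum>s<m. \<Sum>t<m. cnj (\<theta> s) * E p y b s t * \<theta> t))
      = (\<Sum>s<m. \<Sum>t<m. cnj (\<theta> s) * (\<Sum>b\<in>B. E p y b s t) * \<theta> t)"
    by (simp add: sum_distrib_left sum_distrib_right sum.swap[of _ B])
  also have "\<dots> = (\<Sum>s<m. \<Sum>t<m. if t = s then cnj (\<theta> s) * \<theta> t else 0)"
    by (intro sum.cong refl) (auto simp: id)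
  also have "\<dots> = (\<Sum>s<m. 1)"
    using th Th_mem Rph_norm by (simp add: sum.delta)
  also have "\<dots> = of_nat m" by simp
  finally have "(\<Sum>b\<in>B. (\<Sum>s<m. \<Sum>t<m. cnj (\<theta> s) * E p y b s t * \<theta> t)) = of_nat m" .
  then show "(\<Sum>b\<in>B. (ETs p m E \<theta>) p y b i j) = (if i = j then 1 else 0)"
    unfolding ETs_def ij using m by (simp add: sum_divide_distrib[symmetric])
qed

lemma povm_Ed:
  assumes s: "s < m" and pv: "povm m B (E p y)"
  shows "povm 1 B ((Ed p E s) p y)"
  unfolding povm_def
proof (intro conjI ballI allI impI)
  fix b assume b: "b \<in> B"
  have "psd m (E p y b)" using pv b unfolding povm_def by auto
  from psd_diag[OF this s]
  have "psd 1 (\<lambda>_ _. E p y b s s)" by (intro psd_one) simp_all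
  then show "psd 1 ((Ed p E s) p y b)" unfolding Ed_def by simp
next
  fix i j :: nat assume "i < 1" "j < 1"
  then show "(\<Sum>b\<in>B. (Ed p E s) p y b i j) = (if i = j then 1 else 0)"
    using pv s unfolding povm_def Ed_def by auto
qed

lemma val_pos:
  assumes Mnn: "\<forall>x\<in>PiE {..<k} Q. \<forall>a\<in>PiE {..<k} A. 0 \<le> M x a"
    and n: "\<forall>q<k. 1 \<le> n q" and pv: "\<forall>q<k. \<forall>y\<in>Q q. povm (n q) (A q) (E q y)"
  shows "Im (val k Q A M n \<psi> E) = 0 \<and> 0 \<le> Re (val k Q A M n \<psi> E)"
  unfolding val_def
proof (intro rnn_sum)
  fix x a assume x: "x \<in> PiE {..<k} Q" and a: "a \<in> PiE {..<k} A"
  have "Im (texp2 k n \<psi> \<psi> (\<lambda>q. E q (x q) (a q))) = 0 \<and> 0 \<le> Re (texp2 k n \<psi> \<psi> (\<lambda>q. E q (x q) (a q)))"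
  proof (rule texp_pos, intro allI impI conjI)
    fix q assume q: "q < k"
    show "1 \<le> n q" using n q by auto
    have "x q \<in> Q q" "a q \<in> A q" using x a q by auto
    then show "psd (n q) (E q (x q) (a q))" using pv q unfolding povm_def by auto
  qed
  then show "Im (complex_of_real (M x a) * texp2 k n \<psi> \<psi> (\<lambda>q. E q (x q) (a q))) = 0 \<and>
      0 \<le> Re (complex_of_real (M x a) * texp2 k n \<psi> \<psi> (\<lambda>q. E q (x q) (a q)))"
    using Mnn x a by simp
qed

lemma cond_prob_bounds:
  assumes "cond_prob X B P" "x \<in> X" "a \<in> B" "finite B"
  shows "0 \<le> P x a" "P x a \<le> 1"
proof -
  have h: "\<forall>a\<in>B. 0 \<le> P x a" "(\<Sum>a\<in>B. P x a) = 1" using assms unfolding cond_prob_def by auto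
  show "0 \<le> P x a" using h assms by auto
  have "P x a \<le> (\<Sum>a\<in>B. P x a)" using h assms by (intro member_le_sum) auto
  then show "P x a \<le> 1" using h by simp
qed

lemma product_bounds:
  assumes fin: "\<forall>p<k. finite (A p)"
    and P: "P \<in> product_behaviours k Q A" and x: "x \<in> PiE {..<k} Q" and a: "a \<in> PiE {..<k} A"
  shows "0 \<le> P x a \<and> P x a \<le> 1"
proof -
  obtain Ps where Ps: "P = (\<lambda>x a. \<Prod>p<k. Ps p (x p) (a p))" "\<forall>p<k. cond_prob (Q p) (A p) (Ps p)"
    using P unfolding product_behaviours_def by blast
  have b: "0 \<le> Ps p (x p) (a p) \<and> Ps p (x p) (a p) \<le> 1" if "p < k" for p
    using cond_prob_bounds[of "Q p" "A p" "Ps p" "x p" "a p"] Ps(2) that x a fin by auto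
  show ?thesis unfolding Ps(1) using b by (auto intro: prod_nonneg prod_le_1)
qed

lemma local_bounds:
  assumes fin: "\<forall>p<k. finite (A p)"
    and P: "P \<in> local_behaviours k Q A" and x: "x \<in> PiE {..<k} Q" and a: "a \<in> PiE {..<k} A"
  shows "0 \<le> P x a \<and> P x a \<le> 1"
proof -
  obtain n c R where P': "P = (\<lambda>x a. \<Sum>j<(n::nat). c j * R j x a)"
    "\<forall>j<n. 0 \<le> c j \<and> R j \<in> product_behaviours k Q A" "(\<Sum>j<n. c j) = 1"
    using P unfolding local_behaviours_def by blast
  have b: "0 \<le> R j x a \<and> R j x a \<le> 1" if "j < n" for j
    using product_bounds[OF fin _ x a] P'(2) that by blast
  have "(\<Sum>j<n. c j * R j x a) \<le> (\<Sum>j<n. c j)"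
    using b P'(2) by (intro sum_mono) (simp add: mult_left_le)
  moreover have "0 \<le> (\<Sum>j<n. c j * R j x a)" using b P'(2) by (intro sum_nonneg) simp
  ultimately show ?thesis unfolding P'(1) using P'(3) by simp
qed

lemma bell_bound:
  assumes fin: "\<forall>p<k. finite (A p)" "\<forall>p<k. finite (Q p)"
    and P: "P \<in> local_behaviours k Q A"
  shows "\<bar>bell_sum k Q A M P\<bar> \<le> (\<Sum>x\<in>PiE {..<k} Q. \<Sum>a\<in>PiE {..<k} A. \<bar>M x a\<bar>)"
proof -
  have "\<bar>bell_sum k Q A M P\<bar> \<le> (\<Sum>x\<in>PiE {..<k} Q. \<Sum>a\<in>PiE {..<k} A. \<bar>M x a * P x a\<bar>)"
    unfolding bell_sum_def by (rule order.trans[OF sum_abs], intro sum_mono sum_abs)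
  also have "\<dots> \<le> (\<Sum>x\<in>PiE {..<k} Q. \<Sum>a\<in>PiE {..<k} A. \<bar>M x a\<bar>)"
  proof (intro sum_mono)
    fix x a assume "x \<in> PiE {..<k} Q" "a \<in> PiE {..<k} A"
    then have "0 \<le> P x a \<and> P x a \<le> 1" using local_bounds[OF fin(1) P] by blast
    then show "\<bar>M x a * P x a\<bar> \<le> \<bar>M x a\<bar>" by (simp add: abs_mult mult_left_le)
  qed
  finally show ?thesis .
qed

lemma product_local: "P \<in> product_behaviours k Q A \<Longrightarrow> P \<in> local_behaviours k Q A"
  unfolding local_behaviours_def
  by (rule CollectI, rule exI[of _ 1], rule exI[of _ "\<lambda>_. 1"], rule exI[of _ "\<lambda>_. P"]) auto

lemma le_classical:
  assumes fin: "\<forall>p<k. finite (A p)" "\<forall>p<k. finite (Q p)"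
    and P: "P \<in> product_behaviours k Q A"
  shows "\<bar>bell_sum k Q A M P\<bar> \<le> classical_value k Q A M"
  unfolding classical_value_def
proof (rule cSup_upper)
  show "\<bar>bell_sum k Q A M P\<bar> \<in> (\<lambda>P. \<bar>bell_sum k Q A M P\<bar>) ` local_behaviours k Q A"
    using product_local[OF P] by blast
  show "bdd_above ((\<lambda>P. \<bar>bell_sum k Q A M P\<bar>) ` local_behaviours k Q A)"
    using bell_bound[OF fin] by (intro bdd_aboveI2) blast
qed

lemma exists_product:
  assumes "\<forall>p<k. finite (A p) \<and> A p \<noteq> {}"
  shows "(\<lambda>x a. \<Prod>p<k. 1 / real (card (A p))) \<in> product_behaviours k Q A"
  unfolding product_behaviours_def
proof (rule CollectI, rule exI[of _ "\<lambda>p y b. 1 / real (card (A p))"], intro conjI allI impI)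
  fix p assume "p < k"
  then show "cond_prob (Q p) (A p) (\<lambda>y b. 1 / real (card (A p)))"
    using assms unfolding cond_prob_def by auto
qed simp

lemma classical_nonneg:
  assumes "\<forall>p<k. finite (A p) \<and> A p \<noteq> {}" "\<forall>p<k. finite (Q p)"
  shows "0 \<le> classical_value k Q A M"
  using le_classical[OF _ assms(2) exists_product[OF assms(1)], of M] assms(1) by (meson abs_ge_zero order.trans)

definition quadf :: "nat \<Rightarrow> (nat \<Rightarrow> complex) \<Rightarrow> (nat \<Rightarrow> nat \<Rightarrow> complex) \<Rightarrow> complex" where
  "quadf m v F = (\<Sum>s<m. \<Sum>t<m. cnj (v s) * F s t * v t)"

lemma quad_povm_sum:
  assumes pv: "povm m B G"
  shows "(\<Sum>b\<in>B. quadf m v (G b)) = complex_of_real (\<Sum>s<m. (cmod (v s))\<^sup>2)"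
proof -
  have id: "(\<Sum>b\<in>B. G b s t) = (if s = t then 1 else 0)" if "s < m" "t < m" for s t
    using pv that unfolding povm_def by auto
  have "(\<Sum>b\<in>B. quadf m v (G b)) = (\<Sum>s<m. \<Sum>t<m. cnj (v s) * (\<Sum>b\<in>B. G b s t) * v t)"
    unfolding quadf_def by (simp add: sum_distrib_left sum_distrib_right sum.swap[of _ B])
  also have "\<dots> = (\<Sum>s<m. \<Sum>t<m. if t = s then cnj (v s) * v t else 0)"
    by (intro sum.cong refl) (auto simp: id)
  also have "\<dots> = (\<Sum>s<m. cnj (v s) * v s)" by (simp add: sum.delta)
  also have "\<dots> = complex_of_real (\<Sum>s<m. (cmod (v s))\<^sup>2)" by (simp only: of_real_sum cmod_sq_c)
  finally show ?thesis .
qed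

lemma prod_upd_last:
  fixes F :: "nat \<Rightarrow> nat \<Rightarrow> nat \<Rightarrow> complex"
  shows "(\<Prod>q<Suc l. (F(l:=\<lambda>_ _. 1)) q 0 0) = (\<Prod>q<l. F q 0 0)"
  by (auto simp: prod.lessThan_Suc intro!: prod.cong)

lemma texp_base:
  assumes k: "k = Suc l" and ones: "\<forall>q<l. n q = 1"
  shows "texp2 k n \<psi> \<psi> F = (\<Prod>q<l. F q 0 0) * quadf (n l) (\<lambda>s. \<psi> ((z0 k)(l:=s))) (F l)"
proof -
  have l: "l < k" using k by simp
  have ones': "\<forall>q<k. (n(l:=1)) q = 1" using ones k by auto
  have pr: "(\<Prod>q<k. (F(l:=\<lambda>_ _. 1)) q 0 0) = (\<Prod>q<l. F q 0 0)" unfolding k by (rule prod_upd_last)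
  have "texp2 k n \<psi> \<psi> F = (\<Sum>s<n l. \<Sum>t<n l. F l s t * texp2 k (n(l:=1)) (sl l s \<psi>) (sl l t \<psi>) (F(l:=\<lambda>_ _. 1)))"
    by (rule texp2_split[OF l])
  also have "\<dots> = (\<Sum>s<n l. \<Sum>t<n l. F l s t * (cnj (\<psi> ((z0 k)(l:=s))) * (\<Prod>q<l. F q 0 0) * \<psi> ((z0 k)(l:=t))))"
    unfolding texp_ones[OF ones'] sl_def pr ..
  also have "\<dots> = (\<Prod>q<l. F q 0 0) * quadf (n l) (\<lambda>s. \<psi> ((z0 k)(l:=s))) (F l)"
    unfolding quadf_def by (simp add: sum_distrib_left ac_simps)
  finally show ?thesis .
qed

lemma nrm_base:
  assumes k: "k = Suc l" and ones: "\<forall>q<l. n q = 1"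
  shows "nrm k n \<psi> = (\<Sum>s<n l. (cmod (\<psi> ((z0 k)(l:=s))))\<^sup>2)"
proof -
  have l: "l < k" using k by simp
  have ones': "\<forall>q<k. (n(l:=1)) q = 1" using ones k by auto
  show ?thesis unfolding nrm_split[OF l, of n] nrm_ones[OF ones'] sl_def ..
qed

lemma base_case:
  assumes k: "k = Suc l" and ones: "\<forall>q<l. n q = 1"
    and finA: "\<forall>p<k. finite (A p)" and finQ: "\<forall>p<k. finite (Q p)"
    and pv: "\<forall>q<k. \<forall>y\<in>Q q. povm (n q) (A q) (E q y)"
  shows "cmod (val k Q A M n \<psi> E) \<le> nrm k n \<psi> * classical_value k Q A M"
proof -
  define \<phi> where "\<phi> s = \<psi> ((z0 k)(l:=s))" for s
  define N where "N = nrm k n \<psi>"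
  have N: "N = (\<Sum>s<n l. (cmod (\<phi> s))\<^sup>2)" using nrm_base[OF k ones] unfolding N_def \<phi>_def by simp
  have V: "val k Q A M n \<psi> E = (\<Sum>x\<in>PiE {..<k} Q. \<Sum>a\<in>PiE {..<k} A. complex_of_real (M x a) *
      ((\<Prod>q<l. E q (x q) (a q) 0 0) * quadf (n l) \<phi> (E l (x l) (a l))))"
    unfolding val_def texp_base[OF k ones] \<phi>_def ..
  have lk: "l < k" using k by simp
  show ?thesis
  proof (cases "N = 0")
    case True
    have "\<phi> s = 0" if "s < n l" for s
    proof -
      have "\<forall>s\<in>{..<n l}. (cmod (\<phi> s))\<^sup>2 = 0" using N True by (subst sum_nonneg_eq_0_iff[symmetric]) auto
      then show ?thesis using that by auto
    qed
    then have "quadf (n l) \<phi> G = 0" for G unfolding quadf_def by simp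
    then have "val k Q A M n \<psi> E = 0" unfolding V by simp
    then show ?thesis using True N_def by simp
  next
    case False
    then have Npos: "N > 0" using nrm_nonneg[of k n \<psi>] N_def by simp
    define Ps where "Ps q y b = (if q = l then Re (quadf (n l) \<phi> (E l y b)) / N else Re (E q y b 0 0))" for q y b
    define P where "P x a = (\<Prod>q<k. Ps q (x q) (a q))" for x a
    have qreal: "Im (quadf (n l) \<phi> (E l y b)) = 0 \<and> 0 \<le> Re (quadf (n l) \<phi> (E l y b))" if "y \<in> Q l" "b \<in> A l" for y b
    proof -
      have "psd (n l) (E l y b)" using pv lk that unfolding povm_def by auto
      then show ?thesis unfolding quadf_def by (rule psd_quad)
    qed
    have dreal: "Im (E q y b 0 0) = 0 \<and> 0 \<le> Re (E q y b 0 0)" if "q < l" "y \<in> Q q" "b \<in> A q" for q y b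
    proof -
      have "q < k" "n q = 1" using that k ones by auto
      then have "povm 1 (A q) (E q y)" using pv that by metis
      then have "psd 1 (E q y b)" using that unfolding povm_def by blast
      then show ?thesis using psd_diag[of 1 "E q y b" 0] by simp
    qed
    have PB: "P \<in> product_behaviours k Q A"
      unfolding product_behaviours_def
    proof (rule CollectI, rule exI[of _ Ps], intro conjI allI impI)
      show "P = (\<lambda>x a. \<Prod>p<k. Ps p (x p) (a p))" unfolding P_def ..
      fix q assume q: "q < k"
      show "cond_prob (Q q) (A q) (Ps q)"
      proof (cases "q = l")
        case True
        show ?thesis unfolding cond_prob_def
        proof (rule ballI, rule conjI)
          fix y assume y: "y \<in> Q q"
          show "\<forall>b\<in>A q. 0 \<le> Ps q y b" using qreal y True Npos by (auto simp: Ps_def)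
          have pvl: "povm (n l) (A l) (E l y)" using pv lk y True by auto
          have "(\<Sum>b\<in>A l. Re (quadf (n l) \<phi> (E l y b))) = Re (\<Sum>b\<in>A l. quadf (n l) \<phi> (E l y b))"
            by (simp add: Re_sum)
          also have "\<dots> = N" unfolding quad_povm_sum[OF pvl] N by simp
          finally show "(\<Sum>b\<in>A q. Ps q y b) = 1"
            using True Npos by (simp add: Ps_def sum_divide_distrib[symmetric])
        qed
      next
        case False
        then have ql: "q < l" using q k by simp
        show ?thesis unfolding cond_prob_def
        proof (rule ballI, rule conjI)
          fix y assume y: "y \<in> Q q"
          show "\<forall>b\<in>A q. 0 \<le> Ps q y b" using dreal[OF ql y] False by (auto simp: Ps_def)
          have pvq: "povm 1 (A q) (E q y)" using pv q y ones ql by auto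
          have "(\<Sum>b\<in>A q. E q y b 0 0) = 1" using pvq unfolding povm_def by auto
          then show "(\<Sum>b\<in>A q. Ps q y b) = 1" using False by (simp add: Ps_def flip: Re_sum)
        qed
      qed
    qed
    have eq: "val k Q A M n \<psi> E = complex_of_real (N * bell_sum k Q A M P)"
      unfolding V bell_sum_def of_real_sum sum_distrib_left
    proof (intro sum.cong refl)
      fix x a assume x: "x \<in> PiE {..<k} Q" and a: "a \<in> PiE {..<k} A"
      have xa: "\<And>q. q < k \<Longrightarrow> x q \<in> Q q \<and> a q \<in> A q" using x a by auto
      have p1: "(\<Prod>q<l. E q (x q) (a q) 0 0) = complex_of_real (\<Prod>q<l. Re (E q (x q) (a q) 0 0))"
        using dreal xa k by (intro real_prod) auto
      have p2: "quadf (n l) \<phi> (E l (x l) (a l)) = complex_of_real (Re (quadf (n l) \<phi> (E l (x l) (a l))))"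
        using qreal xa lk by (simp add: complex_eq_iff)
      have p3: "P x a = (\<Prod>q<l. Re (E q (x q) (a q) 0 0)) * (Re (quadf (n l) \<phi> (E l (x l) (a l))) / N)"
      proof -
        have "P x a = (\<Prod>q<l. Ps q (x q) (a q)) * Ps l (x l) (a l)"
          unfolding P_def k by (rule prod.lessThan_Suc)
        moreover have "(\<Prod>q<l. Ps q (x q) (a q)) = (\<Prod>q<l. Re (E q (x q) (a q) 0 0))"
          by (intro prod.cong) (auto simp: Ps_def)
        moreover have "Ps l (x l) (a l) = Re (quadf (n l) \<phi> (E l (x l) (a l))) / N"
          by (simp add: Ps_def)
        ultimately show ?thesis by simp
      qed
      show "complex_of_real (M x a) * ((\<Prod>q<l. E q (x q) (a q) 0 0) * quadf (n l) \<phi> (E l (x l) (a l)))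
          = complex_of_real (N * (M x a * P x a))"
      proof -
        have gen: "N * (m * (p * (r / N))) = m * (p * r)" for m p r :: real using Npos by simp
        define r where "r = Re (quadf (n l) \<phi> (E l (x l) (a l)))"
        have p2': "quadf (n l) \<phi> (E l (x l) (a l)) = complex_of_real r" using p2 unfolding r_def .
        have p3': "P x a = (\<Prod>q<l. Re (E q (x q) (a q) 0 0)) * (r / N)" using p3 unfolding r_def .
        show ?thesis unfolding p1 p2' p3' gen by (simp only: of_real_mult)
      qed
    qed
    have "cmod (val k Q A M n \<psi> E) = N * \<bar>bell_sum k Q A M P\<bar>" unfolding eq norm_of_real using Npos by (simp add: abs_mult)
    also have "\<dots> \<le> N * classical_value k Q A M"
      using le_classical[OF finA finQ PB] Npos by (intro mult_left_mono) auto
    finally show ?thesis unfolding N_def .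
  qed
qed

lemma prod_upd1:
  fixes f :: "nat \<Rightarrow> real" and n :: "nat \<Rightarrow> nat" and l p :: nat
  assumes "p < l" "f 1 = 1"
  shows "(\<Prod>q<l. f ((n(p:=1)) q)) = (\<Prod>q\<in>{..<l}-{p}. f (n q))"
    and "(\<Prod>q<l. f (n q)) = f (n p) * (\<Prod>q\<in>{..<l}-{p}. f (n q))"
proof -
  show "(\<Prod>q<l. f ((n(p:=1)) q)) = (\<Prod>q\<in>{..<l}-{p}. f (n q))"
    using assms by (subst prod.remove[of "{..<l}" p]) (auto intro!: prod.cong)
  show "(\<Prod>q<l. f (n q)) = f (n p) * (\<Prod>q\<in>{..<l}-{p}. f (n q))"
    using assms by (subst prod.remove[of "{..<l}" p]) auto
qed

lemma sum_minus_one: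
  fixes f :: "nat \<Rightarrow> real"
  shows "(\<Sum>s<m. \<Sum>s'\<in>{..<m}-{s}. f s') = (real m - 1) * (\<Sum>s<m. f s)"
proof -
  have "(\<Sum>s<m. \<Sum>s'\<in>{..<m}-{s}. f s') = (\<Sum>s<m. (\<Sum>s'<m. f s') - f s)"
    by (intro sum.cong refl) (simp add: sum_diff1)
  also have "\<dots> = real m * (\<Sum>s<m. f s) - (\<Sum>s<m. f s)" by (simp add: sum_subtractf)
  finally show ?thesis by (simp add: algebra_simps)
qed

lemma povm_peeled:
  assumes pk: "p < k" and m: "m = n p" "m > 0" and finA: "\<forall>p<k. finite (A p)"
    and pv: "\<forall>q<k. \<forall>y\<in>Q q. povm (n q) (A q) (E q y)"
  shows "\<theta> \<in> Th m \<Longrightarrow> \<forall>q<k. \<forall>y\<in>Q q. povm ((n(p:=1)) q) (A q) (ETs p m E \<theta> q y)"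
    and "s < m \<Longrightarrow> \<forall>q<k. \<forall>y\<in>Q q. povm ((n(p:=1)) q) (A q) (Ed p E s q y)"
proof -
  assume th: "\<theta> \<in> Th m"
  show "\<forall>q<k. \<forall>y\<in>Q q. povm ((n(p:=1)) q) (A q) (ETs p m E \<theta> q y)"
  proof (intro allI impI ballI)
    fix q y assume q: "q < k" and y: "y \<in> Q q"
    show "povm ((n(p:=1)) q) (A q) (ETs p m E \<theta> q y)"
    proof (cases "q = p")
      case True
      have pvp: "povm m (A p) (E p y)" using pv y True m pk by auto
      have h: "povm 1 (A p) (ETs p m E \<theta> p y)" by (rule povm_ETs[where E=E and p=p and y=y, OF th m(2) pvp]) (use finA pk in auto)
      then show ?thesis using True by simp
    next
      case False
      then show ?thesis using pv q y by (simp add: ETs_def)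
    qed
  qed
next
  assume s: "s < m"
  show "\<forall>q<k. \<forall>y\<in>Q q. povm ((n(p:=1)) q) (A q) (Ed p E s q y)"
  proof (intro allI impI ballI)
    fix q y assume q: "q < k" and y: "y \<in> Q q"
    show "povm ((n(p:=1)) q) (A q) (Ed p E s q y)"
    proof (cases "q = p")
      case True
      have pvp: "povm m (A p) (E p y)" using pv y True m pk by auto
      have h: "povm 1 (A p) (Ed p E s p y)" by (rule povm_Ed[where E=E and p=p and y=y, OF s pvp])
      then show ?thesis using True by simp
    next
      case False
      then show ?thesis using pv q y by (simp add: Ed_def)
    qed
  qed
qed

lemma gen_bound:
  fixes l :: nat
  assumes k: "k = Suc l" and finA: "\<forall>p<k. finite (A p)" and finQ: "\<forall>p<k. finite (Q p)"
  shows "(\<forall>q<k. 1 \<le> n q) \<Longrightarrow> (\<forall>q<k. \<forall>y\<in>Q q. povm (n q) (A q) (E q y)) \<Longrightarrow>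
     cmod (val k Q A M n \<psi> E) \<le> (\<Prod>q<l. 2 * real (n q) - 1) * nrm k n \<psi> * classical_value k Q A M"
proof (induction "\<Sum>q<l. n q" arbitrary: n \<psi> E rule: less_induct)
  case less
  let ?W = "classical_value k Q A M"
  show ?case
  proof (cases "\<exists>p<l. n p \<noteq> 1")
    case False
    then have ones: "\<forall>q<l. n q = 1" by auto
    have "(\<Prod>q<l. 2 * real (n q) - 1) = 1" using ones by simp
    then show ?thesis using base_case[OF k ones finA finQ less.prems(2)]  by simp
  next
    case True
    then obtain p where p: "p < l" "n p \<noteq> 1" by blast
    have pk: "p < k" using p k by simp
    define m where "m = n p"
    have m2: "n p \<ge> 2" using p less.prems(1) pk by force
    then have m0: "m > 0" unfolding m_def by simp
    define n' where "n' = n(p:=1)"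
    define C' where "C' = (\<Prod>q<l. 2 * real (n' q) - 1)"
    have C: "(\<Prod>q<l. 2 * real (n q) - 1) = (2 * real m - 1) * C'"
      unfolding C'_def n'_def m_def
      using prod_upd1[of p l "\<lambda>x. 2 * real x - 1" n] p by simp
    have C'0: "C' \<ge> 0" unfolding C'_def n'_def using less.prems(1) k
      by (intro prod_nonneg) (auto simp: less_Suc_eq)
    have n'1: "\<forall>q<k. 1 \<le> n' q" using less.prems(1) unfolding n'_def by auto
    have IH: "cmod (val k Q A M n' \<psi>'' E'') \<le> C' * nrm k n' \<psi>'' * ?W"
      if "\<forall>q<k. \<forall>y\<in>Q q. povm (n' q) (A q) (E'' q y)" for \<psi>'' E''
      using less.hyps[OF sum_upd_less[where n=n, OF p(1) m2] _ that[unfolded n'_def]] n'1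
      unfolding C'_def n'_def  by blast
    note pp = povm_peeled[OF pk m_def m0 finA less.prems(2)]
    define Y where "Y = (\<Sum>s<m. \<Sum>s'\<in>{..<m}-{s}. val k Q A M n' (sl p s' \<psi>) (Ed p E s))"
    define S where "S = (\<Sum>\<theta>\<in>Th m. val k Q A M n' (psiT p m \<psi> \<theta>) (ET p m E \<theta>))"
    have peel: "S = 4 ^ m * (val k Q A M n \<psi> E + Y)"
      unfolding S_def Y_def n'_def by (rule val_peel[where n=n, OF pk m_def])
    then have vid: "val k Q A M n \<psi> E = S / 4 ^ m - Y" by (simp add: field_simps)
    have b1: "cmod S \<le> real m * C' * ?W * (4 ^ m * nrm k n \<psi>)"
    proof -
      have "cmod S \<le> (\<Sum>\<theta>\<in>Th m. cmod (val k Q A M n' (psiT p m \<psi> \<theta>) (ET p m E \<theta>)))"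
        unfolding S_def by (rule norm_sum)
      also have "\<dots> \<le> (\<Sum>\<theta>\<in>Th m. real m * C' * ?W * nrm k n' (psiT p m \<psi> \<theta>))"
      proof (rule sum_mono)
        fix \<theta> assume th: "\<theta> \<in> Th m"
        have "cmod (val k Q A M n' (psiT p m \<psi> \<theta>) (ET p m E \<theta>)) = real m * cmod (val k Q A M n' (psiT p m \<psi> \<theta>) (ETs p m E \<theta>))"
          unfolding val_scale[OF pk m0] by (simp add: norm_mult)
        also have "\<dots> \<le> real m * (C' * nrm k n' (psiT p m \<psi> \<theta>) * ?W)"
          using IH[OF pp(1)[OF th, folded n'_def]] by (intro mult_left_mono) auto
        finally show "cmod (val k Q A M n' (psiT p m \<psi> \<theta>) (ET p m E \<theta>)) \<le> real m * C' * ?W * nrm k n' (psiT p m \<psi> \<theta>)"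
          by (simp add: ac_simps)
      qed
      also have "\<dots> = real m * C' * ?W * (\<Sum>\<theta>\<in>Th m. nrm k n' (psiT p m \<psi> \<theta>))"
        by (simp add: sum_distrib_left)
      also have "(\<Sum>\<theta>\<in>Th m. nrm k n' (psiT p m \<psi> \<theta>)) = 4 ^ m * nrm k n \<psi>"
        unfolding n'_def by (rule nrm_phase[where n=n, OF pk m_def])
      finally show ?thesis .
    qed
    have b2: "cmod Y \<le> C' * ?W * ((real m - 1) * nrm k n \<psi>)"
    proof -
      have "cmod Y \<le> (\<Sum>s<m. \<Sum>s'\<in>{..<m}-{s}. cmod (val k Q A M n' (sl p s' \<psi>) (Ed p E s)))"
        unfolding Y_def by (rule order.trans[OF norm_sum], intro sum_mono norm_sum)
      also have "\<dots> \<le> (\<Sum>s<m. \<Sum>s'\<in>{..<m}-{s}. C' * ?W * nrm k n' (sl p s' \<psi>))"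
      proof (intro sum_mono)
        fix s s' assume s: "s \<in> {..<m}"
        show "cmod (val k Q A M n' (sl p s' \<psi>) (Ed p E s)) \<le> C' * ?W * nrm k n' (sl p s' \<psi>)"
          using IH[OF pp(2)[of s, folded n'_def], of "sl p s' \<psi>"] s by (simp add: ac_simps)
      qed
      also have "\<dots> = C' * ?W * ((real m - 1) * (\<Sum>s<m. nrm k n' (sl p s \<psi>)))"
        by (simp add: sum_distrib_left[symmetric] sum_minus_one)
      also have "(\<Sum>s<m. nrm k n' (sl p s \<psi>)) = nrm k n \<psi>"
        unfolding n'_def m_def by (rule nrm_split[OF pk, symmetric])
      finally show ?thesis .
    qed
    have "cmod (val k Q A M n \<psi> E) \<le> cmod S / 4 ^ m + cmod Y"
      unfolding vid by (rule order.trans[OF norm_triangle_ineq4]) (simp add: norm_divide norm_power)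
    also have "\<dots> \<le> real m * C' * ?W * nrm k n \<psi> + C' * ?W * ((real m - 1) * nrm k n \<psi>)"
      using b1 b2 by (intro add_mono) (simp_all add: field_simps)
    also have "\<dots> = (2 * real m - 1) * C' * nrm k n \<psi> * ?W" by (simp add: algebra_simps)
    finally show ?thesis unfolding C by simp
  qed
qed

lemma game_bound:
  fixes l :: nat
  assumes k: "k = Suc l" and finA: "\<forall>p<k. finite (A p)" and finQ: "\<forall>p<k. finite (Q p)"
    and Mnn: "\<forall>x\<in>PiE {..<k} Q. \<forall>a\<in>PiE {..<k} A. 0 \<le> M x a"
  shows "(\<forall>q<k. 1 \<le> n q) \<Longrightarrow> (\<forall>q<k. \<forall>y\<in>Q q. povm (n q) (A q) (E q y)) \<Longrightarrow>
     Re (val k Q A M n \<psi> E) \<le> (\<Prod>q<l. real (n q)) * nrm k n \<psi> * classical_value k Q A M"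
proof (induction "\<Sum>q<l. n q" arbitrary: n \<psi> E rule: less_induct)
  case less
  let ?W = "classical_value k Q A M"
  show ?case
  proof (cases "\<exists>p<l. n p \<noteq> 1")
    case False
    then have ones: "\<forall>q<l. n q = 1" by auto
    have pr: "(\<Prod>q<l. real (n q)) = 1" using ones by simp
    have "Re (val k Q A M n \<psi> E) \<le> cmod (val k Q A M n \<psi> E)" by (rule complex_Re_le_cmod)
    also have "\<dots> \<le> nrm k n \<psi> * ?W" by (rule base_case[OF k ones finA finQ less.prems(2)])
    finally show ?thesis unfolding pr by simp
  next
    case True
    then obtain p where p: "p < l" "n p \<noteq> 1" by blast
    have pk: "p < k" using p k by simp
    define m where "m = n p"
    have m2: "n p \<ge> 2" using p less.prems(1) pk by force
    then have m0: "m > 0" unfolding m_def by simp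
    define n' where "n' = n(p:=1)"
    define C' where "C' = (\<Prod>q<l. real (n' q))"
    have C: "(\<Prod>q<l. real (n q)) = real m * C'"
      unfolding C'_def n'_def m_def
      using prod_upd1[of p l "\<lambda>x. real x" n] p by simp
    have n'1: "\<forall>q<k. 1 \<le> n' q" using less.prems(1) unfolding n'_def by auto
    have IH: "Re (val k Q A M n' \<psi>'' E'') \<le> C' * nrm k n' \<psi>'' * ?W"
      if "\<forall>q<k. \<forall>y\<in>Q q. povm (n' q) (A q) (E'' q y)" for \<psi>'' E''
      using less.hyps[OF sum_upd_less[where n=n, OF p(1) m2] _ that[unfolded n'_def]] n'1
      unfolding C'_def n'_def by blast
    note pp = povm_peeled[OF pk m_def m0 finA less.prems(2)]
    define Y where "Y = (\<Sum>s<m. \<Sum>s'\<in>{..<m}-{s}. val k Q A M n' (sl p s' \<psi>) (Ed p E s))"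
    define S where "S = (\<Sum>\<theta>\<in>Th m. val k Q A M n' (psiT p m \<psi> \<theta>) (ET p m E \<theta>))"
    have peel: "S = 4 ^ m * (val k Q A M n \<psi> E + Y)"
      unfolding S_def Y_def n'_def by (rule val_peel[where n=n, OF pk m_def])
    then have vid: "val k Q A M n \<psi> E = S / 4 ^ m - Y" by (simp add: field_simps)
    have Ypos: "0 \<le> Re Y"
      unfolding Y_def Re_sum
    proof (intro sum_nonneg)
      fix s s' assume s: "s \<in> {..<m}"
      show "0 \<le> Re (val k Q A M n' (sl p s' \<psi>) (Ed p E s))"
        using val_pos[OF Mnn n'1 pp(2)[of s, folded n'_def]] s by simp
    qed
    have b1: "Re S \<le> real m * C' * ?W * (4 ^ m * nrm k n \<psi>)"
    proof -
      have "Re S = (\<Sum>\<theta>\<in>Th m. Re (val k Q A M n' (psiT p m \<psi> \<theta>) (ET p m E \<theta>)))"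
        unfolding S_def by (rule Re_sum)
      also have "\<dots> \<le> (\<Sum>\<theta>\<in>Th m. real m * C' * ?W * nrm k n' (psiT p m \<psi> \<theta>))"
      proof (rule sum_mono)
        fix \<theta> assume th: "\<theta> \<in> Th m"
        have "Re (val k Q A M n' (psiT p m \<psi> \<theta>) (ET p m E \<theta>)) = real m * Re (val k Q A M n' (psiT p m \<psi> \<theta>) (ETs p m E \<theta>))"
          unfolding val_scale[OF pk m0] by simp
        also have "\<dots> \<le> real m * (C' * nrm k n' (psiT p m \<psi> \<theta>) * ?W)"
          using IH[OF pp(1)[OF th, folded n'_def]] by (intro mult_left_mono) auto
        finally show "Re (val k Q A M n' (psiT p m \<psi> \<theta>) (ET p m E \<theta>)) \<le> real m * C' * ?W * nrm k n' (psiT p m \<psi> \<theta>)"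
          by (simp add: ac_simps)
      qed
      also have "\<dots> = real m * C' * ?W * (\<Sum>\<theta>\<in>Th m. nrm k n' (psiT p m \<psi> \<theta>))"
        by (simp add: sum_distrib_left)
      also have "(\<Sum>\<theta>\<in>Th m. nrm k n' (psiT p m \<psi> \<theta>)) = 4 ^ m * nrm k n \<psi>"
        unfolding n'_def by (rule nrm_phase[where n=n, OF pk m_def])
      finally show ?thesis .
    qed
    have "Re (val k Q A M n \<psi> E) = Re S / 4 ^ m - Re Y" unfolding vid by simp
    also have "\<dots> \<le> Re S / 4 ^ m" using Ypos by simp
    also have "\<dots> \<le> real m * C' * ?W * nrm k n \<psi>"
      using b1 by (simp add: field_simps)
    finally show ?thesis unfolding C by (simp add: ac_simps)
  qed
qed

lemma bias_val: "quantum_bias k Q A M m \<psi> E = cmod (val k Q A M (\<lambda>_. m) \<psi> E)"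
  unfolding quantum_bias_def val_def tensor_expect_def texp2_def Ix_def by simp

lemma unit_nrm: "unit_state k m \<psi> \<Longrightarrow> nrm k (\<lambda>_. m) \<psi> = 1"
  unfolding unit_state_def nrm_def Ix_def by simp

lemma qset_nonempty:
  assumes A: "\<forall>p<k. finite (A p) \<and> A p \<noteq> {}" and that: "d \<ge> 1"
  shows "{quantum_bias k Q A M m \<psi> E | m \<psi> E.
      1 \<le> m \<and> m \<le> d \<and> unit_state k m \<psi> \<and> (\<forall>p<k. \<forall>x\<in>Q p. povm m (A p) (E p x))} \<noteq> {}"
proof -
  define b0 where "b0 q = (SOME b. b \<in> A q)" for q
  have b0: "b0 q \<in> A q" if "q < k" for q using A that unfolding b0_def by (meson ex_in_conv someI_ex)
  define E :: "nat \<Rightarrow> 'b \<Rightarrow> 'a \<Rightarrow> nat \<Rightarrow> nat \<Rightarrow> complex"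
    where "E q y b = (\<lambda>_ _. if b = b0 q then 1 else 0)" for q y b
  have us: "unit_state k 1 (\<lambda>_. 1)"
  proof -
    have "card (multi_idx k 1) = 1" by (simp add: card_PiE)
    then show ?thesis unfolding unit_state_def by simp
  qed
  have pv: "\<forall>p<k. \<forall>x\<in>Q p. povm 1 (A p) (E p x)"
  proof (intro allI impI ballI)
    fix p x assume p: "p < k" and x: "x \<in> Q p"
    show "povm 1 (A p) (E p x)" unfolding povm_def
    proof (intro conjI ballI allI impI)
      fix b assume "b \<in> A p"
      show "psd 1 (E p x b)" unfolding E_def by (intro psd_one) auto
    next
      fix i j :: nat assume "i < 1" "j < 1"
      then show "(\<Sum>b\<in>A p. E p x b i j) = (if i = j then 1 else 0)"
        using b0[OF p] A p by (simp add: E_def sum.delta)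
    qed
  qed
  show ?thesis using us pv that by blast
qed

theorem mainTheorem8:
  fixes k d :: nat
    and Q :: "nat \<Rightarrow> 'q set" and A :: "nat \<Rightarrow> 'a set"
    and M :: "(nat \<Rightarrow> 'q) \<Rightarrow> (nat \<Rightarrow> 'a) \<Rightarrow> real"
  assumes "k \<ge> 2" and "d \<ge> 1"
    and "\<forall>p<k. finite (Q p) \<and> Q p \<noteq> {}"
    and "\<forall>p<k. finite (A p) \<and> A p \<noteq> {}"
  shows "((\<forall>x\<in>PiE {..<k} Q. \<forall>a\<in>PiE {..<k} A. 0 \<le> M x a) \<longrightarrow>
            quantum_value k Q A M d \<le> real d ^ (k - 1) * classical_value k Q A M)
       \<and> quantum_value k Q A M d \<le> (2 * real d) ^ (k - 1) * classical_value k Q A M"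
proof -
  define l where "l = k - 1"
  have k: "k = Suc l" using assms(1) unfolding l_def by simp
  have finA: "\<forall>p<k. finite (A p)" and finQ: "\<forall>p<k. finite (Q p)" using assms by auto
  have W0: "0 \<le> classical_value k Q A M" using classical_nonneg[OF assms(4) finQ] .
  note ne = qset_nonempty[OF assms(4) assms(2), of Q M]
  show ?thesis
  proof (intro conjI impI)
    show "quantum_value k Q A M d \<le> (2 * real d) ^ (k - 1) * classical_value k Q A M"
      unfolding quantum_value_def
    proof (rule cSup_least[OF ne])
      fix z assume "z \<in> {quantum_bias k Q A M m \<psi> E | m \<psi> E.
        1 \<le> m \<and> m \<le> d \<and> unit_state k m \<psi> \<and> (\<forall>p<k. \<forall>x\<in>Q p. povm m (A p) (E p x))}"
      then obtain m \<psi> E where z: "z = quantum_bias k Q A M m \<psi> E" and m: "1 \<le> m" "m \<le> d"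
        and us: "unit_state k m \<psi>" and pv: "\<forall>p<k. \<forall>x\<in>Q p. povm m (A p) (E p x)" by blast
      have "z \<le> (\<Prod>q<l. 2 * real m - 1) * 1 * classical_value k Q A M"
        using gen_bound[OF k finA finQ, of "\<lambda>_. m" E M \<psi>] m pv unit_nrm[OF us] unfolding z bias_val by simp
      also have "\<dots> = (2 * real m - 1) ^ l * classical_value k Q A M" by simp
      also have "\<dots> \<le> (2 * real d) ^ l * classical_value k Q A M"
        using m W0 by (intro mult_right_mono power_mono) auto
      finally show "z \<le> (2 * real d) ^ (k - 1) * classical_value k Q A M" unfolding l_def .
    qed
  next
    assume Mnn: "\<forall>x\<in>PiE {..<k} Q. \<forall>a\<in>PiE {..<k} A. 0 \<le> M x a"
    show "quantum_value k Q A M d \<le> real d ^ (k - 1) * classical_value k Q A M"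
      unfolding quantum_value_def
    proof (rule cSup_least[OF ne])
      fix z assume "z \<in> {quantum_bias k Q A M m \<psi> E | m \<psi> E.
        1 \<le> m \<and> m \<le> d \<and> unit_state k m \<psi> \<and> (\<forall>p<k. \<forall>x\<in>Q p. povm m (A p) (E p x))}"
      then obtain m \<psi> E where z: "z = quantum_bias k Q A M m \<psi> E" and m: "1 \<le> m" "m \<le> d"
        and us: "unit_state k m \<psi>" and pv: "\<forall>p<k. \<forall>x\<in>Q p. povm m (A p) (E p x)" by blast
      have pos: "Im (val k Q A M (\<lambda>_. m) \<psi> E) = 0 \<and> 0 \<le> Re (val k Q A M (\<lambda>_. m) \<psi> E)"
        using val_pos[OF Mnn, of "\<lambda>_. m" E \<psi>] m pv by simp
      have "z = Re (val k Q A M (\<lambda>_. m) \<psi> E)"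
        unfolding z bias_val using pos by (simp add: cmod_eq_Re)
      also have "\<dots> \<le> (\<Prod>q<l. real m) * 1 * classical_value k Q A M"
        using game_bound[OF k finA finQ Mnn, of "\<lambda>_. m" E \<psi>] m pv unit_nrm[OF us] by simp
      also have "\<dots> = real m ^ l * classical_value k Q A M" by simp
      also have "\<dots> \<le> real d ^ l * classical_value k Q A M"
        using m W0 by (intro mult_right_mono power_mono) auto
      finally show "z \<le> real d ^ (k - 1) * classical_value k Q A M" unfolding l_def .
    qed
  qed
qed


end
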